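(* Let $B$ be a supersoluble brace and $p$ a prime. Then $U_p^+(B)=U_p^{\cdot}(B)$, and this set is an ideal of $B$.
   Context: A brace (skew left brace) is a set $B$ with two binary operations $+$ and $\cdot$ such that $(B,+)$ and $(B,\cdot)$ are groups and $a(b+c)=ab-a+ac$ for all $a,b,c\in B$. $\lambda_a(b)=-a+ab$ defines a homomorphism $\lambda\colon(B,\cdot)\to\operatorname{Aut}(B,+)$. An ideal is a subset that is a subgroup of both groups, normal in both, and invariant under all $\lambda_b$; quotients by ideals are braces. $\operatorname{Soc}(B)=\operatorname{Ker}\lambda\cap Z(B,+)$. $B$ is supersoluble if there is a finite chain of ideals $\{0\}=I_0\le\dots\le I_n=B$ such that for each $i$, either $(I_{i+1}/I_i,+)$ is infinite cyclic and $I_{i+1}/I_i\le\operatorname{Soc}(B/I_i)$, or $I_{i+1}/I_i$ has prime order. For a prime $p$, $U_p^+(B)$ (resp. $U_p^{\cdot}(B)$) is the set of elements of $B$ whose order in $(B,+)$ (resp. $(B,\cdot)$) is finite and divisible only by primes $q>p$. *)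

theory Defs
  imports "HOL-Algebra.Algebra" "HOL-Computational_Algebra.Primes"
begin

record 'a brace_str =
  bcar :: "'a set"
  bplus :: "'a \<Rightarrow> 'a \<Rightarrow> 'a"
  btimes :: "'a \<Rightarrow> 'a \<Rightarrow> 'a"

definition addgrp :: "'a brace_str \<Rightarrow> 'a monoid" where
  "addgrp B = \<lparr>carrier = bcar B, monoid.mult = bplus B,
     one = (THE e. e \<in> bcar B \<and> (\<forall>x\<in>bcar B. bplus B e x = x \<and> bplus B x e = x))\<rparr>"

definition mulgrp :: "'a brace_str \<Rightarrow> 'a monoid" where
  "mulgrp B = \<lparr>carrier = bcar B, monoid.mult = btimes B,
     one = (THE e. e \<in> bcar B \<and> (\<forall>x\<in>bcar B. btimes B e x = x \<and> btimes B x e = x))\<rparr>"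

definition is_brace :: "'a brace_str \<Rightarrow> bool" where
  "is_brace B \<longleftrightarrow> group (addgrp B) \<and> group (mulgrp B) \<and>
     (\<forall>a\<in>bcar B. \<forall>b\<in>bcar B. \<forall>c\<in>bcar B.
        btimes B a (bplus B b c) =
        bplus B (bplus B (btimes B a b) (inv\<^bsub>addgrp B\<^esub> a)) (btimes B a c))"

definition blambda :: "'a brace_str \<Rightarrow> 'a \<Rightarrow> 'a \<Rightarrow> 'a" where
  "blambda B a b = bplus B (inv\<^bsub>addgrp B\<^esub> a) (btimes B a b)"

definition is_ideal :: "'a brace_str \<Rightarrow> 'a set \<Rightarrow> bool" where
  "is_ideal B I \<longleftrightarrow> normal I (addgrp B) \<and> normal I (mulgrp B) \<and>
     (\<forall>b\<in>bcar B. \<forall>a\<in>I. blambda B b a \<in> I)"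

text \<open>For ideals \<open>I \<subseteq> J\<close>: \<open>J/I \<subseteq> Soc(B/I)\<close>, unfolded: for \<open>x \<in> J\<close> the class of \<open>x\<close>
  lies in the kernel of \<open>\<lambda>\<close> of \<open>B/I\<close> and in the centre of \<open>(B/I,+)\<close>.\<close>
definition quot_in_soc :: "'a brace_str \<Rightarrow> 'a set \<Rightarrow> 'a set \<Rightarrow> bool" where
  "quot_in_soc B I J \<longleftrightarrow> (\<forall>x\<in>J. \<forall>b\<in>bcar B.
     bplus B (blambda B x b) (inv\<^bsub>addgrp B\<^esub> b) \<in> I \<and>
     bplus B (bplus B x b) (inv\<^bsub>addgrp B\<^esub> (bplus B b x)) \<in> I)"

definition quot_add :: "'a brace_str \<Rightarrow> 'a set \<Rightarrow> 'a set \<Rightarrow> 'a set monoid" where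
  "quot_add B I J = ((addgrp B)\<lparr>carrier := J\<rparr>) Mod I"

definition supersoluble :: "'a brace_str \<Rightarrow> bool" where
  "supersoluble B \<longleftrightarrow> (\<exists>(I :: nat \<Rightarrow> 'a set) n.
     I 0 = {\<one>\<^bsub>addgrp B\<^esub>} \<and> I n = bcar B \<and>
     (\<forall>i\<le>n. is_ideal B (I i)) \<and>
     (\<forall>i<n. I i \<subseteq> I (Suc i) \<and>
        ((infinite (carrier (quot_add B (I i) (I (Suc i)))) \<and>
          (\<exists>g\<in>carrier (quot_add B (I i) (I (Suc i))).
             generate (quot_add B (I i) (I (Suc i))) {g} = carrier (quot_add B (I i) (I (Suc i)))) \<and>
          quot_in_soc B (I i) (I (Suc i)))
         \<or> Factorial_Ring.prime (card (carrier (quot_add B (I i) (I (Suc i))))))))"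

definition U_set :: "'a monoid \<Rightarrow> nat \<Rightarrow> 'a set" where
  "U_set G p = {b \<in> carrier G. group.ord G b \<noteq> 0 \<and>
       (\<forall>q. Factorial_Ring.prime q \<and> q dvd group.ord G b \<longrightarrow> q > p)}"

definition U_plus :: "'a brace_str \<Rightarrow> nat \<Rightarrow> 'a set" where
  "U_plus B p = U_set (addgrp B) p"

definition U_times :: "'a brace_str \<Rightarrow> nat \<Rightarrow> 'a set" where
  "U_times B p = U_set (mulgrp B) p"

end

theory Submission
  imports Defs "HOL-Number_Theory.Residues"
begin

lemma nt1:
  fixes e :: int and s r :: nat
  assumes s: "Factorial_Ring.prime s" and r: "Factorial_Ring.prime r" and nd: "\<not> r dvd (s - 1)"
    and h: "int s dvd e ^ r - 1"
  shows "int s dvd e - 1"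
proof -
  define c where "c = nat (e mod int s)"
  have s0: "s > 0" using s prime_gt_0_nat by blast
  have ce: "int c = e mod int s" unfolding c_def using s0 by simp
  have "[e = int c] (mod int s)" using ce by (simp add: cong_def)
  then have "[e ^ r = int c ^ r] (mod int s)" by (simp add: cong_pow)
  moreover have "[e ^ r = 1] (mod int s)" using h by (simp add: cong_iff_dvd_diff)
  ultimately have "[int c ^ r = 1] (mod int s)" by (meson cong_sym cong_trans)
  then have cr: "[c ^ r = 1] (mod s)" by (metis cong_int_iff of_nat_1 of_nat_power)
  have nsc: "\<not> s dvd c"
  proof
    assume "s dvd c"
    then have "s dvd c ^ r" using r by (metis dvd_power dvd_trans prime_gt_0_nat)
    then have "[c ^ r = 0] (mod s)" by (simp add: cong_0_iff)
    then have "[1 = 0] (mod s)" using cr by (meson cong_sym cong_trans)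
    then show False using s by (simp add: cong_0_iff)
  qed
  have f: "[c ^ (s - 1) = 1] (mod s)" using fermat_theorem[OF s nsc] .
  have cop: "gcd r (s - 1) = 1"
    using r nd by (simp add: prime_imp_coprime_nat coprime_iff_gcd_eq_1 [symmetric])
  have r0: "r \<noteq> 0" using r by auto
  obtain x y where xy: "r * x = (s - 1) * y + gcd r (s - 1)" using bezout_nat[OF r0] by blast
  then have xy': "r * x = (s - 1) * y + 1" using cop by simp
  have "[c ^ (r * x) = 1] (mod s)"
    using cong_pow[OF cr, of x] by (simp add: power_mult)
  moreover have "[c ^ (r * x) = c] (mod s)"
  proof -
    have "c ^ (r * x) = (c ^ (s - 1)) ^ y * c" using xy' by (simp add: power_mult power_add)
    moreover have "[(c ^ (s - 1)) ^ y * c = 1 ^ y * c] (mod s)"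
      using cong_pow[OF f, of y] cong_mult by (meson cong_refl)
    ultimately show ?thesis by simp
  qed
  ultimately have "[c = 1] (mod s)" by (meson cong_sym cong_trans)
  then have "[int c = 1] (mod int s)" by (metis cong_int_iff of_nat_1)
  then have "[e = 1] (mod int s)" using \<open>[e = int c] (mod int s)\<close> by (meson cong_trans)
  then show ?thesis by (simp add: cong_iff_dvd_diff)
qed

lemma odd_pow_eq1:
  fixes e :: int and r :: nat
  assumes "odd r" "e ^ r = 1"
  shows "e = 1"
proof -
  have r0: "r > 0" using assms(1) by (simp add: odd_pos)
  have "\<not> e < 0"
  proof
    assume "e < 0"
    then have "e ^ r < 0" using assms(1) by (simp add: power_less_zero_eq)
    then show False using assms(2) by simp
  qed
  moreover have "e \<noteq> 0"
  proof
    assume "e = 0"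
    then have "e ^ r = 0" using r0 by simp
    then show False using assms(2) by simp
  qed
  moreover have "\<not> e > 1"
  proof
    assume "e > 1"
    then have "e ^ r > 1" using r0 by (simp add: one_less_power)
    then show False using assms(2) by simp
  qed
  ultimately show ?thesis by linarith
qed

context group begin

lemma conj_hom: assumes y: "y \<in> carrier G" shows "(\<lambda>x. y \<otimes> x \<otimes> inv y) \<in> hom G G"
proof (rule homI)
  fix a b assume a: "a \<in> carrier G" and b: "b \<in> carrier G"
  have [simp]: "inv y \<otimes> (y \<otimes> c) = c" if "c \<in> carrier G" for c
    using that y by (simp add: m_assoc[symmetric])
  have "y \<otimes> a \<otimes> inv y \<otimes> (y \<otimes> b \<otimes> inv y) = y \<otimes> a \<otimes> (inv y \<otimes> y) \<otimes> b \<otimes> inv y"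
    using a b y by (simp add: m_assoc)
  also have "\<dots> = y \<otimes> (a \<otimes> b) \<otimes> inv y" using a b y by (simp add: m_assoc)
  finally show "y \<otimes> (a \<otimes> b) \<otimes> inv y = y \<otimes> a \<otimes> inv y \<otimes> (y \<otimes> b \<otimes> inv y)" by simp
qed (use y in simp)

lemma conj_int_pow:
  "x \<in> carrier G \<Longrightarrow> y \<in> carrier G \<Longrightarrow> y \<otimes> x [^] (k::int) \<otimes> inv y = (y \<otimes> x \<otimes> inv y) [^] k"
  using hom_int_pow[OF conj_hom[of y] _ is_group is_group, of x k] by simp

lemma conj_iter:
  assumes z: "z \<in> carrier G" and w: "w \<in> carrier G" and c: "w \<otimes> z \<otimes> inv w = z [^] (e::int)"
  shows "w [^] (i::nat) \<otimes> z \<otimes> inv (w [^] i) = z [^] (e ^ i)"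
proof (induction i)
  case 0
  then show ?case using z by simp
next
  case (Suc i)
  have wi: "w [^] i \<in> carrier G" using w by simp
  have "w [^] Suc i \<otimes> z \<otimes> inv (w [^] Suc i) = w [^] i \<otimes> (w \<otimes> z \<otimes> inv w) \<otimes> inv (w [^] i)"
    using w z wi by (simp add: m_assoc inv_mult_group)
  also have "\<dots> = w [^] i \<otimes> z [^] e \<otimes> inv (w [^] i)" using c by simp
  also have "\<dots> = (w [^] i \<otimes> z \<otimes> inv (w [^] i)) [^] e" using conj_int_pow[OF z wi] .
  also have "\<dots> = (z [^] (e ^ i)) [^] e" using Suc by simp
  also have "\<dots> = z [^] (e ^ Suc i)" using int_pow_pow[OF z] by (simp add: mult.commute)
  finally show ?case .
qed

lemma commute_int_pow:
  assumes x: "x \<in> carrier G" and y: "y \<in> carrier G" and c: "x \<otimes> y = y \<otimes> x"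
  shows "x [^] (i::int) \<otimes> y [^] (j::int) = y [^] j \<otimes> x [^] i"
proof -
  have "y \<otimes> x \<otimes> inv y = x" using c x y by (metis inv_solve_right m_closed)
  then have 1: "y \<otimes> x [^] i \<otimes> inv y = x [^] i" using conj_int_pow[OF x y] by simp
  then have c1: "x [^] i \<otimes> y = y \<otimes> x [^] i" using x y
    by (metis inv_solve_right int_pow_closed m_closed)
  have "x [^] i \<otimes> y [^] j \<otimes> inv (x [^] i) = y [^] j"
    using conj_int_pow[OF y int_pow_closed[OF x]] c1 x y
    by (metis inv_solve_right int_pow_closed m_closed)
  then show ?thesis using x y by (metis inv_solve_right int_pow_closed m_closed)
qed


lemma comm_conj: "x \<in> carrier G \<Longrightarrow> y \<in> carrier G \<Longrightarrow> x \<otimes> y = y \<otimes> x \<Longrightarrow> x \<otimes> y \<otimes> inv x = y"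
  by (simp add: m_assoc)

lemma conj_comm: assumes "x \<in> carrier G" "y \<in> carrier G" "x \<otimes> y \<otimes> inv x = y" shows "x \<otimes> y = y \<otimes> x"
proof -
  have "x \<otimes> y = x \<otimes> y \<otimes> inv x \<otimes> x" using assms(1,2) by (simp add: m_assoc)
  then show ?thesis using assms(3) by simp
qed

lemma AL_comm:
  assumes z: "z \<in> carrier G" and w: "w \<in> carrier G"
    and c: "w \<otimes> z \<otimes> inv w = z [^] (e::int)"
    and wr: "w [^] (r::nat) = z [^] (a::int)"
    and r: "Factorial_Ring.prime r" "odd r"
    and n: "ord z = 0 \<or> (Factorial_Ring.prime (ord z) \<and> \<not> r dvd (ord z - 1))"
  shows "z \<otimes> w = w \<otimes> z"
proof -
  have za: "z [^] a \<otimes> z = z \<otimes> z [^] a"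
    using commute_int_pow[OF z z refl, of a 1] z by simp
  have "w [^] r \<otimes> z \<otimes> inv (w [^] r) = z"
    unfolding wr using comm_conj[OF int_pow_closed[OF z] z za] .
  then have "z [^] (e ^ r) = z [^] (1::int)" using conj_iter[OF z w c, of r] z by simp
  then have dv: "int (ord z) dvd 1 - e ^ r" using int_pow_eq[OF z] by blast
  have "z [^] e = z [^] (1::int)"
    using n
  proof
    assume "ord z = 0"
    then have "e ^ r = 1" using dv by simp
    then have "e = 1" using odd_pow_eq1 r(2) by blast
    then show ?thesis by simp
  next
    assume s: "Factorial_Ring.prime (ord z) \<and> \<not> r dvd (ord z - 1)"
    have "int (ord z) dvd e ^ r - 1" using dv by (metis dvd_minus_iff minus_diff_eq)
    then have "int (ord z) dvd e - 1" using nt1 s r(1) by blast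
    then have "int (ord z) dvd 1 - e" by (metis dvd_minus_iff minus_diff_eq)
    then show ?thesis using int_pow_eq[OF z] by blast
  qed
  then have "w \<otimes> z \<otimes> inv w = z" using c z by simp
  then have "w \<otimes> z = z \<otimes> w" using conj_comm[OF w z] by simp
  then show ?thesis by simp
qed


lemma AL_struct:
  assumes z: "z \<in> carrier G" and w: "w \<in> carrier G"
    and zw: "z \<otimes> w = w \<otimes> z"
    and gen: "\<forall>x\<in>carrier G. \<exists>(i::int) (j::int). x = z [^] j \<otimes> w [^] i"
    and wr: "w [^] (int r) = z [^] (a::int)"
    and wnot: "\<forall>(i::int) (j::int). w [^] i = z [^] j \<longrightarrow> int r dvd i"
    and r: "Factorial_Ring.prime r"
    and n: "ord z = 0 \<or> (Factorial_Ring.prime (ord z) \<and> ord z \<noteq> r)"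
  shows "(\<exists>h\<in>carrier G. ord h = r \<and> {x \<in> carrier G. x [^] r = \<one>} = range (\<lambda>i::int. h [^] i) \<and>
            (\<forall>x\<in>carrier G. \<exists>j::int. x \<otimes> inv (z [^] j) \<in> range (\<lambda>i::int. h [^] i)))
       \<or> (ord z = 0 \<and> {x \<in> carrier G. x [^] r = \<one>} = {\<one>} \<and>
            (\<exists>g\<in>carrier G. ord g = 0 \<and> (\<forall>x\<in>carrier G. \<exists>k::int. x = g [^] k)))"
proof -
  have cm: "x \<otimes> y = y \<otimes> x" if xy: "x \<in> carrier G" "y \<in> carrier G" for x y
  proof -
    obtain i j :: int where x: "x = z [^] j \<otimes> w [^] i" using gen xy(1) by blast
    obtain k l :: int where y: "y = z [^] l \<otimes> w [^] k" using gen xy(2) by blast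
    have c1: "z [^] j \<otimes> w [^] k = w [^] k \<otimes> z [^] j" using commute_int_pow[OF z w zw] .
    have c2: "w [^] i \<otimes> z [^] l = z [^] l \<otimes> w [^] i" using commute_int_pow[OF z w zw] by metis
    have c3: "z [^] j \<otimes> z [^] l = z [^] l \<otimes> z [^] j" using commute_int_pow[OF z z refl] .
    have c4: "w [^] i \<otimes> w [^] k = w [^] k \<otimes> w [^] i" using commute_int_pow[OF w w refl] .
    have "x \<otimes> y = z [^] j \<otimes> (w [^] i \<otimes> z [^] l) \<otimes> w [^] k" using x y z w by (simp add: m_assoc)
    also have "\<dots> = z [^] j \<otimes> z [^] l \<otimes> (w [^] i \<otimes> w [^] k)" using c2 z w by (simp add: m_assoc)
    also have "\<dots> = z [^] l \<otimes> z [^] j \<otimes> (w [^] k \<otimes> w [^] i)" using c3 c4 by simp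
    also have "\<dots> = z [^] l \<otimes> (z [^] j \<otimes> w [^] k) \<otimes> w [^] i" using z w by (simp add: m_assoc)
    also have "\<dots> = z [^] l \<otimes> (w [^] k \<otimes> z [^] j) \<otimes> w [^] i" using c1 by simp
    also have "\<dots> = y \<otimes> x" using x y z w by (simp add: m_assoc)
    finally show ?thesis .
  qed
  have pd: "(x \<otimes> y) [^] (k::int) = x [^] k \<otimes> y [^] k" if "x \<in> carrier G" "y \<in> carrier G" for x y k
    using int_pow_mult_distrib[OF cm[OF that] that] .
  have rpos: "r > 0" using r prime_gt_0_nat by blast
  have P1: "z [^] k = \<one>" if "z [^] (int r * k) = \<one>" for k :: int
  proof -
    have d: "int (ord z) dvd int r * k" using that int_pow_eq_id[OF z] by blast
    have "int (ord z) dvd k"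
      using n
    proof
      assume "ord z = 0" then show ?thesis using d rpos by simp
    next
      assume s: "Factorial_Ring.prime (ord z) \<and> ord z \<noteq> r"
      then have ps: "Factorial_Ring.prime (int (ord z))" by simp
      have "\<not> int (ord z) dvd int r"
        using s r primes_dvd_imp_eq by (metis int_dvd_int_iff)
      then show ?thesis using prime_dvd_multD[OF ps d] by blast
    qed
    then show ?thesis using int_pow_eq_id[OF z] by blast
  qed
  have rpow: "x [^] (int r) = x [^] r" for x using int_pow_int by metis
  show ?thesis
  proof (cases "\<exists>b::int. z [^] a = z [^] (int r * b)")
    case True
    then obtain b :: int where b: "z [^] a = z [^] (int r * b)" by blast
    define h where "h = w \<otimes> inv (z [^] b)"
    have hc: "h \<in> carrier G" unfolding h_def using z w by simp
    have whz: "w = h \<otimes> z [^] b" unfolding h_def using z w by (simp add: m_assoc)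
    have hr: "h [^] (int r) = \<one>"
    proof -
      have "h [^] (int r) = w [^] (int r) \<otimes> (inv (z [^] b)) [^] (int r)"
        unfolding h_def using pd z w by simp
      also have "\<dots> = z [^] (int r * b) \<otimes> inv (z [^] (int r * b))"
        using wr b z by (simp add: int_pow_inv int_pow_pow mult.commute)
      finally show ?thesis using z by simp
    qed
    have hne: "h \<noteq> \<one>"
    proof
      assume "h = \<one>"
      then have "w [^] (1::int) = z [^] b" using whz z w by simp
      then have "int r dvd 1" using wnot by blast
      then show False using r by simp
    qed
    have ordh: "ord h = r"
    proof -
      have "ord h dvd r" using hr pow_eq_id[OF hc] rpow by simp
      moreover have "ord h \<noteq> 1" using ord_eq_1[OF hc] hne by simp
      ultimately show ?thesis using r by (meson prime_nat_iff)
    qed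
    have repr: "\<exists>(i::int) (k::int). x = h [^] i \<otimes> z [^] k \<and> x \<otimes> inv (z [^] k) = h [^] i" if x: "x \<in> carrier G" for x
    proof -
      obtain i j :: int where xe: "x = z [^] j \<otimes> w [^] i" using gen x by blast
      have "w [^] i = h [^] i \<otimes> z [^] (b * i)"
        using whz pd[OF hc int_pow_closed[OF z]] int_pow_pow[OF z] by simp
      then have "x = z [^] j \<otimes> (h [^] i \<otimes> z [^] (b * i))" using xe by simp
      also have "\<dots> = (z [^] j \<otimes> h [^] i) \<otimes> z [^] (b * i)" using hc z by (simp add: m_assoc)
      also have "\<dots> = (h [^] i \<otimes> z [^] j) \<otimes> z [^] (b * i)" using cm hc z by simp
      also have "\<dots> = h [^] i \<otimes> (z [^] j \<otimes> z [^] (b * i))" using hc z by (simp add: m_assoc)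
      also have "\<dots> = h [^] i \<otimes> z [^] (j + b * i)" using int_pow_mult[OF z] by simp
      finally have e: "x = h [^] i \<otimes> z [^] (j + b * i)" .
      then have "x \<otimes> inv (z [^] (j + b * i)) = h [^] i" using hc z by (simp add: m_assoc)
      then show ?thesis using e by blast
    qed
    have T: "{x \<in> carrier G. x [^] r = \<one>} = range (\<lambda>i::int. h [^] i)"
    proof
      show "{x \<in> carrier G. x [^] r = \<one>} \<subseteq> range (\<lambda>i::int. h [^] i)"
      proof
        fix x assume "x \<in> {x \<in> carrier G. x [^] r = \<one>}"
        then have x: "x \<in> carrier G" "x [^] (int r) = \<one>" using rpow by auto
        obtain i k :: int where e: "x = h [^] i \<otimes> z [^] k" using repr[OF x(1)] by blast
        have "x [^] (int r) = (h [^] (int r)) [^] i \<otimes> z [^] (int r * k)"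
          using e pd hc z int_pow_pow by (simp add: mult.commute)
        then have "z [^] (int r * k) = \<one>" using x(2) hr z by simp
        then have "z [^] k = \<one>" using P1 by blast
        then have "x = h [^] i" using e hc by simp
        then show "x \<in> range (\<lambda>i::int. h [^] i)" by blast
      qed
    next
      show "range (\<lambda>i::int. h [^] i) \<subseteq> {x \<in> carrier G. x [^] r = \<one>}"
      proof
        fix x assume "x \<in> range (\<lambda>i::int. h [^] i)"
        then obtain i :: int where x: "x = h [^] i" by blast
        have "x [^] (int r) = (h [^] (int r)) [^] i" using x int_pow_pow[OF hc] by (simp add: mult.commute)
        then have "x [^] (int r) = \<one>" using hr by simp
        then show "x \<in> {x \<in> carrier G. x [^] r = \<one>}" using x hc rpow by simp
      qed
    qed
    have "\<forall>x\<in>carrier G. \<exists>j::int. x \<otimes> inv (z [^] j) \<in> range (\<lambda>i::int. h [^] i)"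
      using repr by blast
    then show ?thesis using hc ordh T by blast
  next
    case False
    have oz: "ord z = 0"
    proof (rule ccontr)
      assume "ord z \<noteq> 0"
      then have s: "Factorial_Ring.prime (ord z)" "ord z \<noteq> r" using n by auto
      have "coprime (int r) (int (ord z))"
        using s r primes_dvd_imp_eq by (metis coprime_int_iff prime_imp_coprime_nat)
      then obtain u v where uv: "u * int r + v * int (ord z) = 1"
        using bezout_int[of "int r" "int (ord z)"] by (metis coprime_iff_gcd_eq_1)
      have "int (ord z) dvd int r * (a * u) - a"
      proof -
        have e: "u * int r - 1 = - (v * int (ord z))" using uv by linarith
        have "int r * (a * u) - a = a * (u * int r - 1)" by (simp add: algebra_simps)
        also have "\<dots> = a * (- (v * int (ord z)))" using e by simp
        finally show ?thesis by simp
      qed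
      then have "z [^] a = z [^] (int r * (a * u))" using int_pow_eq[OF z] by blast
      then show False using False by blast
    qed
    have nra: "\<not> int r dvd a"
    proof
      assume "int r dvd a"
      then obtain b :: int where "a = int r * b" by blast
      then show False using False by blast
    qed
    have "coprime a (int r)"
      using nra r by (metis coprime_commute prime_imp_coprime prime_nat_int_transfer)
    then obtain u v where uv: "u * a + v * int r = 1"
      using bezout_int[of a "int r"] by (metis coprime_iff_gcd_eq_1)
    define g where "g = w [^] u \<otimes> z [^] v"
    have gc: "g \<in> carrier G" unfolding g_def using z w by simp
    have gr: "g [^] (int r) = z"
    proof -
      have "g [^] (int r) = (w [^] (int r)) [^] u \<otimes> z [^] (v * int r)"
        unfolding g_def using pd z w int_pow_pow by (simp add: mult.commute)
      also have "\<dots> = z [^] (a * u) \<otimes> z [^] (v * int r)" using wr int_pow_pow[OF z] by simp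
      also have "\<dots> = z [^] (u * a + v * int r)" using int_pow_mult[OF z] by (simp add: mult.commute)
      finally show ?thesis using uv z by simp
    qed
    have ga: "g [^] a = w"
    proof -
      have "g [^] a = w [^] (u * a) \<otimes> z [^] (v * a)"
        unfolding g_def using pd z w int_pow_pow by simp
      also have "\<dots> = w [^] (u * a) \<otimes> (w [^] (int r)) [^] v" using wr int_pow_pow[OF z] by (simp add: mult.commute)
      also have "\<dots> = w [^] (u * a + v * int r)" using int_pow_mult[OF w] int_pow_pow[OF w]
        by (simp add: mult.commute)
      finally show ?thesis using uv w by simp
    qed
    have allg: "\<forall>x\<in>carrier G. \<exists>k::int. x = g [^] k"
    proof
      fix x assume "x \<in> carrier G"
      then obtain i j :: int where xe: "x = z [^] j \<otimes> w [^] i" using gen by blast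
      have "x = (g [^] (int r)) [^] j \<otimes> (g [^] a) [^] i" using xe gr ga by simp
      also have "\<dots> = g [^] (int r * j + a * i)" using int_pow_pow[OF gc] int_pow_mult[OF gc] by simp
      finally show "\<exists>k::int. x = g [^] k" by blast
    qed
    have og: "ord g = 0"
    proof (rule ccontr)
      assume "ord g \<noteq> 0"
      have "g [^] (int (ord g)) = \<one>" using gc by (simp add: int_pow_int)
      then have "z [^] (int (ord g)) = \<one>"
        using gr int_pow_pow[OF gc] by (metis int_pow_one mult.commute)
      then have "int (ord z) dvd int (ord g)" using int_pow_eq_id[OF z] by blast
      then show False using oz \<open>ord g \<noteq> 0\<close> by simp
    qed
    have T: "{x \<in> carrier G. x [^] r = \<one>} = {\<one>}"
    proof
      show "{x \<in> carrier G. x [^] r = \<one>} \<subseteq> {\<one>}"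
      proof
        fix x assume "x \<in> {x \<in> carrier G. x [^] r = \<one>}"
        then have x: "x \<in> carrier G" "x [^] (int r) = \<one>" using rpow by auto
        obtain k :: int where k: "x = g [^] k" using allg x(1) by blast
        have "g [^] (k * int r) = \<one>" using x(2) k int_pow_pow[OF gc] by simp
        then have "int (ord g) dvd k * int r" using int_pow_eq_id[OF gc] by blast
        then have "k = 0" using og rpos by simp
        then show "x \<in> {\<one>}" using k by simp
      qed
    qed simp
    show ?thesis using oz T gc og allg by blast
  qed
qed

end

context group begin

definition cycq :: "'a set \<Rightarrow> 'a set \<Rightarrow> 'a \<Rightarrow> nat \<Rightarrow> bool" where
  "cycq L N z n \<longleftrightarrow> z \<in> N \<and> (\<forall>x\<in>N. \<exists>j::int. x \<otimes> inv (z [^] j) \<in> L) \<and>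
      (\<forall>j::int. z [^] j \<in> L \<longleftrightarrow> int n dvd j)"

lemma rcos_eq_iff:
  assumes "subgroup L G" "x \<in> carrier G" "y \<in> carrier G"
  shows "L #> x = L #> y \<longleftrightarrow> x \<otimes> inv y \<in> L"
proof -
  have "L #> x = L #> y \<longleftrightarrow> x \<in> L #> y"
    using repr_independence[OF _ assms(3,1)] repr_independenceD[OF assms(1,2)] by metis
  also have "\<dots> \<longleftrightarrow> x \<otimes> inv y \<in> L"
    using subgroup.rcos_module[OF assms(1) is_group assms(3,2)] .
  finally show ?thesis .
qed

lemma rcos_eq_L_iff:
  assumes "subgroup L G" "x \<in> carrier G"
  shows "L #> x = L \<longleftrightarrow> x \<in> L"
proof -
  have 1: "L #> \<one> = L" using coset_mult_one[OF subgroup.subset[OF assms(1)]] .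
  have 2: "x \<otimes> inv \<one> = x" using assms(2) by simp
  show ?thesis using rcos_eq_iff[OF assms one_closed] unfolding 1 2 .
qed

end

locale qpair = group G for G (structure) +
  fixes L N
  assumes LN: "L \<lhd> G" and NS: "subgroup N G" and LsN: "L \<subseteq> N"
begin

abbreviation "K \<equiv> G\<lparr>carrier := N\<rparr> Mod L"

lemma LS: "subgroup L G" using normal_imp_subgroup[OF LN] .

lemma LnN: "L \<lhd> G\<lparr>carrier := N\<rparr>" using normal_restrict_supergroup[OF NS LN LsN] .

lemma K_group: "group K" using normal.factorgroup_is_group[OF LnN] .

lemma N_carr: "x \<in> N \<Longrightarrow> x \<in> carrier G" using subgroup.mem_carrier[OF NS] .

lemma carrier_K: "carrier K = (\<lambda>x. L #> x) ` N"
  by (simp add: carrier_FactGroup)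

lemma mult_K: "x \<in> N \<Longrightarrow> y \<in> N \<Longrightarrow> (L #> x) \<otimes>\<^bsub>K\<^esub> (L #> y) = L #> (x \<otimes> y)"
  using normal.rcos_sum[OF LnN, of x y] unfolding r_coset_consistent set_mult_consistent mult_FactGroup
  by simp

lemma one_K: "\<one>\<^bsub>K\<^esub> = L" by simp

lemma pow_K: assumes "x \<in> N" shows "(L #> x) [^]\<^bsub>K\<^esub> (k::int) = L #> (x [^] k)"
proof -
  have a: "x \<in> carrier (G\<lparr>carrier := N\<rparr>)" using assms by simp
  have "(L #> x) [^]\<^bsub>K\<^esub> k = L #> (x [^]\<^bsub>G\<lparr>carrier := N\<rparr>\<^esub> k)"
    using normal.FactGroup_int_pow[OF LnN a] unfolding r_coset_consistent .
  then show ?thesis unfolding int_pow_consistent[OF NS assms] .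
qed

lemma npow_K: assumes "x \<in> N" shows "(L #> x) [^]\<^bsub>K\<^esub> (k::nat) = L #> (x [^] k)"
  using pow_K[OF assms, of "int k"] by (simp add: int_pow_int)

lemma eq_K: "x \<in> N \<Longrightarrow> y \<in> N \<Longrightarrow> L #> x = L #> y \<longleftrightarrow> x \<otimes> inv y \<in> L"
  using rcos_eq_iff[OF LS] N_carr by blast

lemma eq1_K: "x \<in> N \<Longrightarrow> L #> x = L \<longleftrightarrow> x \<in> L"
  using rcos_eq_L_iff[OF LS] N_carr by blast

lemma inK: "x \<in> N \<Longrightarrow> L #> x \<in> carrier K" using carrier_K by blast

lemma KG: "group (G\<lparr>carrier := N\<rparr> Mod L)" using K_group .

lemma L_sub_N: "l \<in> L \<Longrightarrow> l \<in> N" using LsN by blast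

lemma pow_in_N: "x \<in> N \<Longrightarrow> x [^] (k::int) \<in> N"
  using subgroup_int_pow_closed[OF NS] by blast


lemma inv_K: assumes x: "x \<in> N" shows "inv\<^bsub>K\<^esub> (L #> x) = L #> inv x"
proof -
  have ix: "inv x \<in> N" using subgroup.m_inv_closed[OF NS x] .
  have e: "inv x \<otimes> x = \<one>" using l_inv[OF N_carr[OF x]] .
  have "L #> (inv x \<otimes> x) = L" unfolding e using coset_mult_one[OF subgroup.subset[OF LS]] .
  then have "(L #> inv x) \<otimes>\<^bsub>K\<^esub> (L #> x) = \<one>\<^bsub>K\<^esub>"
    unfolding mult_K[OF ix x] one_K .
  then show ?thesis using group.inv_equality[OF KG _ inK[OF x] inK[OF ix]] by blast
qed

lemma ordK_char:
  assumes z: "z \<in> N" and h: "\<forall>j::int. z [^] j \<in> L \<longleftrightarrow> int n dvd j"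
  shows "group.ord K (L #> z) = n"
proof -
  have zK: "L #> z \<in> carrier K" using inK[OF z] .
  have "int (group.ord K (L #> z)) dvd j \<longleftrightarrow> int n dvd j" for j :: int
  proof -
    have "int (group.ord K (L #> z)) dvd j \<longleftrightarrow> (L #> z) [^]\<^bsub>K\<^esub> j = \<one>\<^bsub>K\<^esub>"
      using group.int_pow_eq_id[OF KG zK] by simp
    also have "\<dots> \<longleftrightarrow> z [^] j \<in> L"
      using pow_K[OF z] eq1_K[OF pow_in_N[OF z]] by simp
    also have "\<dots> \<longleftrightarrow> int n dvd j" using h by blast
    finally show ?thesis .
  qed
  then have "int (group.ord K (L #> z)) dvd int n" "int n dvd int (group.ord K (L #> z))"
    by (metis dvd_refl)+
  then show ?thesis by (simp add: dvd_antisym)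
qed

lemma cycq_ord:
  assumes "cycq L N z n"
  shows "group.ord K (L #> z) = n"
proof -
  have z: "z \<in> N" using assms unfolding cycq_def by blast
  have zK: "L #> z \<in> carrier K" using inK[OF z] .
  have "int (group.ord K (L #> z)) dvd j \<longleftrightarrow> int n dvd j" for j :: int
  proof -
    have "int (group.ord K (L #> z)) dvd j \<longleftrightarrow> (L #> z) [^]\<^bsub>K\<^esub> j = \<one>\<^bsub>K\<^esub>"
      using group.int_pow_eq_id[OF KG zK] by simp
    also have "\<dots> \<longleftrightarrow> z [^] j \<in> L"
      using pow_K[OF z] eq1_K[OF pow_in_N[OF z]] by simp
    also have "\<dots> \<longleftrightarrow> int n dvd j" using assms unfolding cycq_def by blast
    finally show ?thesis .
  qed
  then have "int (group.ord K (L #> z)) dvd int n" "int n dvd int (group.ord K (L #> z))"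
    by (metis dvd_refl)+
  then show ?thesis by (simp add: dvd_antisym)
qed

lemma cycq_gen:
  assumes "cycq L N z n"
  shows "carrier K = generate K {L #> z}"
proof -
  have z: "z \<in> N" using assms unfolding cycq_def by blast
  have zK: "L #> z \<in> carrier K" using inK[OF z] .
  have g: "generate K {L #> z} = {(L #> z) [^]\<^bsub>K\<^esub> (k::int) | k. k \<in> UNIV}"
    using group.generate_pow[OF KG zK] .
  show ?thesis
  proof
    show "carrier K \<subseteq> generate K {L #> z}"
    proof
      fix c assume "c \<in> carrier K"
      then obtain x where x: "x \<in> N" "c = L #> x" using carrier_K by blast
      then obtain j :: int where j: "x \<otimes> inv (z [^] j) \<in> L" using assms unfolding cycq_def by blast
      then have "L #> x = L #> (z [^] j)" using eq_K[OF x(1) pow_in_N[OF z]] by simp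
      then have "c = (L #> z) [^]\<^bsub>K\<^esub> j" using pow_K[OF z] x by simp
      then show "c \<in> generate K {L #> z}" using g by blast
    qed
  next
    show "generate K {L #> z} \<subseteq> carrier K"
      using group.generate_incl[OF KG] zK by blast
  qed
qed

lemma cycq_card:
  assumes "cycq L N z n"
  shows "card (carrier K) = n"
  using group.generate_pow_card[OF KG inK[of z]] cycq_gen[OF assms] cycq_ord[OF assms] assms
  unfolding cycq_def by simp

lemma cycq_infinite:
  assumes "cycq L N z 0"
  shows "infinite (carrier K)"
proof -
  have "carrier K \<noteq> {}" using monoid.one_closed[OF group.is_monoid[OF KG]] by blast
  then show ?thesis using cycq_card[OF assms] by (meson card_0_eq)
qed

lemma K_cycq:
  assumes g: "g \<in> carrier K" and gen: "generate K {g} = carrier K"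
  shows "\<exists>z. cycq L N z (card (carrier K))"
proof -
  obtain z where z: "z \<in> N" "g = L #> z" using g carrier_K by blast
  have ordg: "group.ord K g = card (carrier K)"
    using group.generate_pow_card[OF KG g] gen by simp
  have gp: "generate K {g} = {g [^]\<^bsub>K\<^esub> (k::int) | k. k \<in> UNIV}"
    using group.generate_pow[OF KG g] .
  have "cycq L N z (card (carrier K))"
    unfolding cycq_def
  proof (intro conjI ballI allI)
    show "z \<in> N" using z by simp
  next
    fix x assume x: "x \<in> N"
    then have "L #> x \<in> generate K {g}" using gen inK by simp
    then obtain j :: int where "L #> x = g [^]\<^bsub>K\<^esub> j" using gp by blast
    then have "L #> x = L #> (z [^] j)" using pow_K[OF z(1)] z by simp
    then show "\<exists>j::int. x \<otimes> inv (z [^] j) \<in> L" using eq_K[OF x pow_in_N[OF z(1)]] by blast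
  next
    fix j :: int
    have "z [^] j \<in> L \<longleftrightarrow> g [^]\<^bsub>K\<^esub> j = \<one>\<^bsub>K\<^esub>"
      using pow_K[OF z(1)] eq1_K[OF pow_in_N[OF z(1)]] z by simp
    also have "\<dots> \<longleftrightarrow> int (card (carrier K)) dvd j"
      using group.int_pow_eq_id[OF KG g] ordg by simp
    finally show "z [^] j \<in> L \<longleftrightarrow> int (card (carrier K)) dvd j" .
  qed
  then show ?thesis by blast
qed

lemma K_prime:
  assumes p: "Factorial_Ring.prime (card (carrier K))"
  shows "\<exists>z. cycq L N z (card (carrier K))"
proof -
  have fin: "finite (carrier K)"
  proof (rule ccontr)
    assume "infinite (carrier K)"
    then have "card (carrier K) = 0" by simp
    then show False using p by simp
  qed
  have "card (carrier K) \<ge> 2" using p prime_ge_2_nat by blast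
  then have "carrier K \<noteq> {\<one>\<^bsub>K\<^esub>}" by auto
  then obtain g where g: "g \<in> carrier K" "g \<noteq> \<one>\<^bsub>K\<^esub>" using monoid.one_closed[OF group.is_monoid[OF KG]] by blast
  have "group.ord K g dvd card (carrier K)"
    using group.ord_dvd_group_order[OF KG g(1)] unfolding order_def .
  moreover have "group.ord K g \<noteq> 1" using group.ord_eq_1[OF KG g(1)] g(2) by simp
  moreover have "\<forall>m. m dvd card (carrier K) \<longrightarrow> m = 1 \<or> m = card (carrier K)"
    using p by (simp add: prime_nat_iff)
  ultimately have o: "group.ord K g = card (carrier K)" by blast
  have sub: "generate K {g} \<subseteq> carrier K" using group.generate_incl[OF KG] g(1) by blast
  have "card (generate K {g}) = card (carrier K)"
    using group.generate_pow_card[OF KG g(1)] o by simp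
  then have "generate K {g} = carrier K" using card_subset_eq[OF fin sub] by simp
  then show ?thesis using K_cycq[OF g(1)] by blast
qed

lemma descent:
  assumes x: "x \<in> N" and xm: "x [^] (m::nat) \<in> L" and m: "m > 0"
    and alt: "(\<exists>z. cycq L N z 0) \<or> (Factorial_Ring.prime (card (carrier K)) \<and> coprime m (card (carrier K)))"
  shows "x \<in> L"
proof -
  have xK: "L #> x \<in> carrier K" using inK[OF x] .
  have xm_N: "x [^] m \<in> N" using xm LsN by blast
  have "(L #> x) [^]\<^bsub>K\<^esub> m = \<one>\<^bsub>K\<^esub>"
    using npow_K[OF x, of m] eq1_K[OF xm_N] xm by simp
  then have od: "group.ord K (L #> x) dvd m" using group.pow_eq_id[OF KG xK] by simp
  have "group.ord K (L #> x) = 1"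
    using alt
  proof
    assume "\<exists>z. cycq L N z 0"
    then obtain z where z: "cycq L N z 0" by blast
    have zN: "z \<in> N" using z unfolding cycq_def by blast
    obtain j :: int where j: "x \<otimes> inv (z [^] j) \<in> L" using z x unfolding cycq_def by blast
    then have e: "L #> x = (L #> z) [^]\<^bsub>K\<^esub> j"
      using eq_K[OF x pow_in_N[OF zN]] pow_K[OF zN] by simp
    have zK: "L #> z \<in> carrier K" using inK[OF zN] .
    have "((L #> z) [^]\<^bsub>K\<^esub> j) [^]\<^bsub>K\<^esub> (int m) = \<one>\<^bsub>K\<^esub>"
      using \<open>(L #> x) [^]\<^bsub>K\<^esub> m = \<one>\<^bsub>K\<^esub>\<close> e
      by (metis int_pow_int)
    then have "(L #> z) [^]\<^bsub>K\<^esub> (j * int m) = \<one>\<^bsub>K\<^esub>"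
      using group.int_pow_pow[OF KG zK] by metis
    then have "int (group.ord K (L #> z)) dvd j * int m" using group.int_pow_eq_id[OF KG zK] by simp
    then have "j = 0" using cycq_ord[OF z] m by simp
    then have "L #> x = \<one>\<^bsub>K\<^esub>" using e int_pow_0 by simp
    then show ?thesis using group.ord_eq_1[OF KG xK] by simp
  next
    assume a: "Factorial_Ring.prime (card (carrier K)) \<and> coprime m (card (carrier K))"
    have "group.ord K (L #> x) dvd card (carrier K)"
      using group.ord_dvd_group_order[OF KG xK] unfolding order_def .
    then show ?thesis using a od
      by (metis coprime_common_divisor_nat)
  qed
  then have "L #> x = L" using group.ord_eq_1[OF KG xK] by simp
  then show ?thesis using eq1_K[OF x] by simp
qed

end

context group begin

lemma qpairI: "L \<lhd> G \<Longrightarrow> subgroup N G \<Longrightarrow> L \<subseteq> N \<Longrightarrow> qpair G L N"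
  by (intro qpair.intro qpair_axioms.intro is_group)

lemma gswap:
  assumes LG: "L \<lhd> G" and MG: "M \<lhd> G" and NG: "N \<lhd> G" and LM: "L \<subseteq> M" and MN: "M \<subseteq> N"
    and cz: "cycq L M z n" and cw: "cycq M N w r"
    and r: "Factorial_Ring.prime r" "odd r"
    and n: "n = 0 \<or> (Factorial_Ring.prime n \<and> n \<noteq> r \<and> \<not> r dvd (n - 1))"
  shows "({x \<in> N. x [^] r \<in> L} \<lhd> G \<and> L \<subseteq> {x \<in> N. x [^] r \<in> L} \<and>
           card (carrier (G\<lparr>carrier := {x \<in> N. x [^] r \<in> L}\<rparr> Mod L)) = r \<and>
           cycq {x \<in> N. x [^] r \<in> L} N z n)
       \<or> (n = 0 \<and> {x \<in> N. x [^] r \<in> L} = L \<and> (\<exists>g. cycq L N g 0))"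
proof -
  define T where "T = {x \<in> N. x [^] r \<in> L}"
  have NS: "subgroup N G" using normal_imp_subgroup[OF NG] .
  have MS: "subgroup M G" using normal_imp_subgroup[OF MG] .
  have LS: "subgroup L G" using normal_imp_subgroup[OF LG] .
  have LN: "L \<subseteq> N" using LM MN by (rule subset_trans)
  interpret Q: qpair G L N using qpairI[OF LG NS LN] .
  have KG: "group Q.K" using Q.KG .
  have zM: "z \<in> M" using cz unfolding cycq_def by simp
  have zN: "z \<in> N" using MN zM by (rule subsetD)
  have wN: "w \<in> N" using cw unfolding cycq_def by simp
  have zc: "z \<in> carrier G" using Q.N_carr[OF zN] .
  have wc: "w \<in> carrier G" using Q.N_carr[OF wN] .
  have zjN: "z [^] (j::int) \<in> N" for j using Q.pow_in_N[OF zN] .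
  have wjN: "w [^] (j::int) \<in> N" for j using Q.pow_in_N[OF wN] .
  have zjM: "z [^] (j::int) \<in> M" for j using subgroup_int_pow_closed[OF MS zM] .
  define \<zeta> where "\<zeta> = L #> z"
  define \<omega> where "\<omega> = L #> w"
  have \<zeta>K: "\<zeta> \<in> carrier Q.K" unfolding \<zeta>_def using Q.inK[OF zN] .
  have \<omega>K: "\<omega> \<in> carrier Q.K" unfolding \<omega>_def using Q.inK[OF wN] .
  have powz: "\<zeta> [^]\<^bsub>Q.K\<^esub> (j::int) = L #> (z [^] j)" for j unfolding \<zeta>_def using Q.pow_K[OF zN] .
  have poww: "\<omega> [^]\<^bsub>Q.K\<^esub> (j::int) = L #> (w [^] j)" for j unfolding \<omega>_def using Q.pow_K[OF wN] .
  have gen: "\<forall>c\<in>carrier Q.K. \<exists>(i::int) (j::int). c = \<zeta> [^]\<^bsub>Q.K\<^esub> j \<otimes>\<^bsub>Q.K\<^esub> \<omega> [^]\<^bsub>Q.K\<^esub> i"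
  proof
    fix c assume "c \<in> carrier Q.K"
    then obtain x where x: "x \<in> N" "c = L #> x" using Q.carrier_K by auto
    have xc: "x \<in> carrier G" using Q.N_carr[OF x(1)] .
    obtain i :: int where i: "x \<otimes> inv (w [^] i) \<in> M" using cw x(1) unfolding cycq_def by blast
    obtain j :: int where j: "x \<otimes> inv (w [^] i) \<otimes> inv (z [^] j) \<in> L" using cz i unfolding cycq_def by blast
    have zwN: "z [^] j \<otimes> w [^] i \<in> N" using subgroup.m_closed[OF NS zjN wjN] .
    have "x \<otimes> inv (z [^] j \<otimes> w [^] i) = x \<otimes> inv (w [^] i) \<otimes> inv (z [^] j)"
      using xc zc wc by (simp add: inv_mult_group m_assoc)
    then have "L #> x = L #> (z [^] j \<otimes> w [^] i)" using Q.eq_K[OF x(1) zwN] j by simp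
    also have "\<dots> = \<zeta> [^]\<^bsub>Q.K\<^esub> j \<otimes>\<^bsub>Q.K\<^esub> \<omega> [^]\<^bsub>Q.K\<^esub> i"
      using Q.mult_K[OF zjN wjN] powz poww by simp
    finally show "\<exists>(i::int) (j::int). c = \<zeta> [^]\<^bsub>Q.K\<^esub> j \<otimes>\<^bsub>Q.K\<^esub> \<omega> [^]\<^bsub>Q.K\<^esub> i" using x by blast
  qed
  have ordz: "group.ord Q.K \<zeta> = n"
    unfolding \<zeta>_def using Q.ordK_char[OF zN] cz unfolding cycq_def by blast
  obtain e :: int where e: "\<omega> \<otimes>\<^bsub>Q.K\<^esub> \<zeta> \<otimes>\<^bsub>Q.K\<^esub> inv\<^bsub>Q.K\<^esub> \<omega> = \<zeta> [^]\<^bsub>Q.K\<^esub> e"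
  proof -
    have cM: "w \<otimes> z \<otimes> inv w \<in> M" using normal_invE(2)[OF MG wc zM] .
    then obtain e :: int where e: "w \<otimes> z \<otimes> inv w \<otimes> inv (z [^] e) \<in> L" using cz unfolding cycq_def by blast
    have cN: "w \<otimes> z \<otimes> inv w \<in> N" using MN cM by (rule subsetD)
    have iwN: "inv w \<in> N" using subgroup.m_inv_closed[OF NS wN] .
    have "\<omega> \<otimes>\<^bsub>Q.K\<^esub> \<zeta> \<otimes>\<^bsub>Q.K\<^esub> inv\<^bsub>Q.K\<^esub> \<omega> = L #> (w \<otimes> z \<otimes> inv w)"
      unfolding \<omega>_def \<zeta>_def Q.inv_K[OF wN] Q.mult_K[OF wN zN]
      using Q.mult_K[OF subgroup.m_closed[OF NS wN zN] iwN] by simp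
    also have "\<dots> = L #> (z [^] e)" using Q.eq_K[OF cN zjN] e by simp
    finally show ?thesis using that powz by simp
  qed
  have wrM: "w [^] (int r) \<in> M" using cw unfolding cycq_def by simp
  obtain a :: int where a: "\<omega> [^]\<^bsub>Q.K\<^esub> (int r) = \<zeta> [^]\<^bsub>Q.K\<^esub> a"
  proof -
    obtain a :: int where a: "w [^] (int r) \<otimes> inv (z [^] a) \<in> L" using cz wrM unfolding cycq_def by blast
    have "L #> (w [^] (int r)) = L #> (z [^] a)" using Q.eq_K[OF wjN zjN] a by simp
    then show ?thesis using that powz poww by simp
  qed
  have wnot: "\<forall>(i::int) (j::int). \<omega> [^]\<^bsub>Q.K\<^esub> i = \<zeta> [^]\<^bsub>Q.K\<^esub> j \<longrightarrow> int r dvd i"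
  proof (intro allI impI)
    fix i j :: int
    assume "\<omega> [^]\<^bsub>Q.K\<^esub> i = \<zeta> [^]\<^bsub>Q.K\<^esub> j"
    then have "L #> (w [^] i) = L #> (z [^] j)" using powz poww by simp
    then have l: "w [^] i \<otimes> inv (z [^] j) \<in> L" using Q.eq_K[OF wjN zjN] by simp
    have "w [^] i \<otimes> inv (z [^] j) \<in> M" using LM l by (rule subsetD)
    then have "w [^] i \<otimes> inv (z [^] j) \<otimes> z [^] j \<in> M" using subgroup.m_closed[OF MS _ zjM] by blast
    moreover have "w [^] i \<otimes> inv (z [^] j) \<otimes> z [^] j = w [^] i" using zc wc by (simp add: m_assoc)
    ultimately have "w [^] i \<in> M" by simp
    then show "int r dvd i" using cw unfolding cycq_def by blast
  qed
  have comm: "\<zeta> \<otimes>\<^bsub>Q.K\<^esub> \<omega> = \<omega> \<otimes>\<^bsub>Q.K\<^esub> \<zeta>"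
  proof (rule group.AL_comm[OF KG \<zeta>K \<omega>K e _ r])
    show "\<omega> [^]\<^bsub>Q.K\<^esub> r = \<zeta> [^]\<^bsub>Q.K\<^esub> a" using a by (simp add: int_pow_int)
    show "group.ord Q.K \<zeta> = 0 \<or> Factorial_Ring.prime (group.ord Q.K \<zeta>) \<and> \<not> r dvd group.ord Q.K \<zeta> - 1"
      using n ordz by auto
  qed
  have nc: "group.ord Q.K \<zeta> = 0 \<or> (Factorial_Ring.prime (group.ord Q.K \<zeta>) \<and> group.ord Q.K \<zeta> \<noteq> r)"
    using n ordz by auto
  note ALs = group.AL_struct[OF KG \<zeta>K \<omega>K comm gen a wnot r(1) nc]
  have Tmem: "x \<in> T \<longleftrightarrow> L #> x \<in> {c \<in> carrier Q.K. c [^]\<^bsub>Q.K\<^esub> r = \<one>\<^bsub>Q.K\<^esub>}" if x: "x \<in> N" for x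
  proof -
    have xr: "x [^] r \<in> N" using Q.pow_in_N[OF x, of "int r"] by (simp add: int_pow_int)
    have "L #> x \<in> carrier Q.K" using Q.inK[OF x] .
    moreover have "(L #> x) [^]\<^bsub>Q.K\<^esub> r = \<one>\<^bsub>Q.K\<^esub> \<longleftrightarrow> x [^] r \<in> L"
      using Q.npow_K[OF x, of r] Q.eq1_K[OF xr] by simp
    ultimately show ?thesis unfolding T_def using x by simp
  qed
  have LT: "L \<subseteq> T"
  proof
    fix l assume l: "l \<in> L"
    have "l [^] (int r) \<in> L" using subgroup_int_pow_closed[OF LS l] .
    then show "l \<in> T" unfolding T_def using l LN by (auto simp: int_pow_int)
  qed
  have TN: "T \<subseteq> N" unfolding T_def by blast
  from ALs show ?thesis
  proof
    assume "\<exists>h\<in>carrier Q.K. group.ord Q.K h = r \<and>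
        {x \<in> carrier Q.K. x [^]\<^bsub>Q.K\<^esub> r = \<one>\<^bsub>Q.K\<^esub>} = range (\<lambda>i::int. h [^]\<^bsub>Q.K\<^esub> i) \<and>
        (\<forall>x\<in>carrier Q.K. \<exists>j::int. x \<otimes>\<^bsub>Q.K\<^esub> inv\<^bsub>Q.K\<^esub> (\<zeta> [^]\<^bsub>Q.K\<^esub> j) \<in> range (\<lambda>i::int. h [^]\<^bsub>Q.K\<^esub> i))"
    then obtain h where h: "h \<in> carrier Q.K" "group.ord Q.K h = r"
      and TK: "{x \<in> carrier Q.K. x [^]\<^bsub>Q.K\<^esub> r = \<one>\<^bsub>Q.K\<^esub>} = range (\<lambda>i::int. h [^]\<^bsub>Q.K\<^esub> i)"
      and cos: "\<forall>x\<in>carrier Q.K. \<exists>j::int. x \<otimes>\<^bsub>Q.K\<^esub> inv\<^bsub>Q.K\<^esub> (\<zeta> [^]\<^bsub>Q.K\<^esub> j) \<in> range (\<lambda>i::int. h [^]\<^bsub>Q.K\<^esub> i)"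
      by blast
    define R where "R = range (\<lambda>i::int. h [^]\<^bsub>Q.K\<^esub> i)"
    have TmemR: "x \<in> T \<longleftrightarrow> L #> x \<in> R" if "x \<in> N" for x
      unfolding R_def TK[symmetric] using Tmem[OF that] .
    have TS: "subgroup T G"
    proof (rule subgroupI)
      show "T \<subseteq> carrier G" using TN NS subgroup.subset by blast
      show "T \<noteq> {}" using LT subgroup.one_closed[OF LS] by blast
    next
      fix x assume x: "x \<in> T"
      then have xN: "x \<in> N" using TN by blast
      have ixN: "inv x \<in> N" using subgroup.m_inv_closed[OF NS xN] .
      obtain i :: int where i: "L #> x = h [^]\<^bsub>Q.K\<^esub> i" using TmemR[OF xN] x unfolding R_def by blast
      have "L #> inv x = inv\<^bsub>Q.K\<^esub> (L #> x)" using Q.inv_K[OF xN] by simp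
      also have "\<dots> = h [^]\<^bsub>Q.K\<^esub> (- i)" using i group.int_pow_neg[OF KG h(1)] by simp
      finally have "L #> inv x \<in> R" unfolding R_def by blast
      then show "inv x \<in> T" using TmemR[OF ixN] by blast
    next
      fix x y assume x: "x \<in> T" and y: "y \<in> T"
      then have xN: "x \<in> N" and yN: "y \<in> N" using TN by auto
      have xyN: "x \<otimes> y \<in> N" using subgroup.m_closed[OF NS xN yN] .
      obtain i :: int where i: "L #> x = h [^]\<^bsub>Q.K\<^esub> i" using TmemR[OF xN] x unfolding R_def by blast
      obtain k :: int where k: "L #> y = h [^]\<^bsub>Q.K\<^esub> k" using TmemR[OF yN] y unfolding R_def by blast
      have "L #> (x \<otimes> y) = (L #> x) \<otimes>\<^bsub>Q.K\<^esub> (L #> y)" using Q.mult_K[OF xN yN] by simp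
      also have "\<dots> = h [^]\<^bsub>Q.K\<^esub> (i + k)" using i k group.int_pow_mult[OF KG h(1)] by simp
      finally have "L #> (x \<otimes> y) \<in> R" unfolding R_def by blast
      then show "x \<otimes> y \<in> T" using TmemR[OF xyN] by blast
    qed
    have TG: "T \<lhd> G"
    proof (rule normal_invI[OF TS])
      fix g x assume g: "g \<in> carrier G" and x: "x \<in> T"
      then have xN: "x \<in> N" and xr: "x [^] r \<in> L" unfolding T_def by auto
      have xc: "x \<in> carrier G" using Q.N_carr[OF xN] .
      have "g \<otimes> x \<otimes> inv g \<in> N" using normal_invE(2)[OF NG g xN] .
      moreover have "(g \<otimes> x \<otimes> inv g) [^] r \<in> L"
      proof -
        have "(g \<otimes> x \<otimes> inv g) [^] (int r) = g \<otimes> x [^] (int r) \<otimes> inv g"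
          using conj_int_pow[OF xc g] by simp
        moreover have "g \<otimes> x [^] (int r) \<otimes> inv g \<in> L"
          using normal_invE(2)[OF LG g] xr by (simp add: int_pow_int)
        ultimately show ?thesis by (simp add: int_pow_int)
      qed
      ultimately show "g \<otimes> x \<otimes> inv g \<in> T" unfolding T_def by blast
    qed
    have carT: "carrier (G\<lparr>carrier := T\<rparr> Mod L) = R"
    proof
      show "carrier (G\<lparr>carrier := T\<rparr> Mod L) \<subseteq> R"
      proof
        fix c assume "c \<in> carrier (G\<lparr>carrier := T\<rparr> Mod L)"
        then obtain x where x: "x \<in> T" "c = L #> x" by (auto simp: carrier_FactGroup)
        then show "c \<in> R" using TmemR TN by blast
      qed
    next
      show "R \<subseteq> carrier (G\<lparr>carrier := T\<rparr> Mod L)"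
      proof
        fix c assume c: "c \<in> R"
        then have "c \<in> {c \<in> carrier Q.K. c [^]\<^bsub>Q.K\<^esub> r = \<one>\<^bsub>Q.K\<^esub>}" using TK unfolding R_def by simp
        then obtain x where x: "x \<in> N" "c = L #> x" using Q.carrier_K by auto
        then have "x \<in> T" using TmemR c by blast
        then show "c \<in> carrier (G\<lparr>carrier := T\<rparr> Mod L)" using x by (auto simp: carrier_FactGroup)
      qed
    qed
    have "R = generate Q.K {h}" unfolding R_def using group.generate_pow[OF KG h(1)] by auto
    then have cardT: "card (carrier (G\<lparr>carrier := T\<rparr> Mod L)) = r"
      using carT group.generate_pow_card[OF KG h(1)] h(2) by simp
    have cyc: "cycq T N z n"
      unfolding cycq_def
    proof (intro conjI ballI allI)
      show "z \<in> N" using zN .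
    next
      fix x assume x: "x \<in> N"
      obtain j :: int where j: "(L #> x) \<otimes>\<^bsub>Q.K\<^esub> inv\<^bsub>Q.K\<^esub> (\<zeta> [^]\<^bsub>Q.K\<^esub> j) \<in> R"
        using cos Q.inK[OF x] unfolding R_def by blast
      have izN: "inv (z [^] j) \<in> N" using subgroup.m_inv_closed[OF NS zjN] .
      have "(L #> x) \<otimes>\<^bsub>Q.K\<^esub> inv\<^bsub>Q.K\<^esub> (\<zeta> [^]\<^bsub>Q.K\<^esub> j) = L #> (x \<otimes> inv (z [^] j))"
        using powz Q.inv_K[OF zjN] Q.mult_K[OF x izN] by simp
      then have "L #> (x \<otimes> inv (z [^] j)) \<in> R" using j by simp
      then have "x \<otimes> inv (z [^] j) \<in> T" using TmemR subgroup.m_closed[OF NS x izN] by blast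
      then show "\<exists>j::int. x \<otimes> inv (z [^] j) \<in> T" by blast
    next
      fix j :: int
      have "z [^] j \<in> T \<longleftrightarrow> (z [^] j) [^] (int r) \<in> L" unfolding T_def using zjN by (simp add: int_pow_int)
      also have "\<dots> \<longleftrightarrow> z [^] (j * int r) \<in> L" using int_pow_pow[OF zc] by simp
      also have "\<dots> \<longleftrightarrow> int n dvd j * int r" using cz unfolding cycq_def by blast
      also have "\<dots> \<longleftrightarrow> int n dvd j"
        using n
      proof
        assume "n = 0" then show ?thesis using r(1) by (auto simp: prime_gt_0_nat)
      next
        assume np: "Factorial_Ring.prime n \<and> n \<noteq> r \<and> \<not> r dvd n - 1"
        then have pn: "Factorial_Ring.prime (int n)" by simp
        have "\<not> int n dvd int r" using np r(1) primes_dvd_imp_eq by (metis int_dvd_int_iff)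
        then show ?thesis using prime_dvd_mult_iff[OF pn] by auto
      qed
      finally show "z [^] j \<in> T \<longleftrightarrow> int n dvd j" .
    qed
    show ?thesis using TG LT cardT cyc unfolding T_def by blast
  next
    assume "group.ord Q.K \<zeta> = 0 \<and> {x \<in> carrier Q.K. x [^]\<^bsub>Q.K\<^esub> r = \<one>\<^bsub>Q.K\<^esub>} = {\<one>\<^bsub>Q.K\<^esub>} \<and>
        (\<exists>g\<in>carrier Q.K. group.ord Q.K g = 0 \<and> (\<forall>x\<in>carrier Q.K. \<exists>k::int. x = g [^]\<^bsub>Q.K\<^esub> k))"
    then have o0: "group.ord Q.K \<zeta> = 0" and TK: "{x \<in> carrier Q.K. x [^]\<^bsub>Q.K\<^esub> r = \<one>\<^bsub>Q.K\<^esub>} = {\<one>\<^bsub>Q.K\<^esub>}"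
      and ex: "\<exists>g\<in>carrier Q.K. group.ord Q.K g = 0 \<and> (\<forall>x\<in>carrier Q.K. \<exists>k::int. x = g [^]\<^bsub>Q.K\<^esub> k)"
      by auto
    have n0: "n = 0" using o0 ordz by simp
    have TL: "T = L"
    proof
      show "T \<subseteq> L"
      proof
        fix x assume x: "x \<in> T"
        then have xN: "x \<in> N" using TN by blast
        have "L #> x \<in> {c \<in> carrier Q.K. c [^]\<^bsub>Q.K\<^esub> r = \<one>\<^bsub>Q.K\<^esub>}" using Tmem[OF xN] x by blast
        then have "L #> x \<in> {\<one>\<^bsub>Q.K\<^esub>}" unfolding TK .
        then have "L #> x = L" by simp
        then show "x \<in> L" using Q.eq1_K[OF xN] by simp
      qed
    qed (rule LT)
    obtain g where g: "g \<in> carrier Q.K" "group.ord Q.K g = 0" and allg: "\<forall>x\<in>carrier Q.K. \<exists>k::int. x = g [^]\<^bsub>Q.K\<^esub> k"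
      using ex by blast
    obtain g0 where g0: "g0 \<in> N" "g = L #> g0" using g(1) Q.carrier_K by auto
    have "cycq L N g0 0"
      unfolding cycq_def
    proof (intro conjI ballI allI)
      show "g0 \<in> N" using g0(1) .
    next
      fix x assume x: "x \<in> N"
      obtain k :: int where k: "L #> x = g [^]\<^bsub>Q.K\<^esub> k" using allg Q.inK[OF x] by blast
      then have "L #> x = L #> (g0 [^] k)" using Q.pow_K[OF g0(1)] g0(2) by simp
      then show "\<exists>j::int. x \<otimes> inv (g0 [^] j) \<in> L" using Q.eq_K[OF x Q.pow_in_N[OF g0(1)]] by blast
    next
      fix j :: int
      have "g0 [^] j \<in> L \<longleftrightarrow> g [^]\<^bsub>Q.K\<^esub> j = \<one>\<^bsub>Q.K\<^esub>"
        using Q.pow_K[OF g0(1)] Q.eq1_K[OF Q.pow_in_N[OF g0(1)]] g0(2) by simp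
      also have "\<dots> \<longleftrightarrow> int 0 dvd j" using group.int_pow_eq_id[OF KG g(1)] g(2) by simp
      finally show "g0 [^] j \<in> L \<longleftrightarrow> int 0 dvd j" .
    qed
    then show ?thesis using n0 TL unfolding T_def by blast
  qed
qed

end

locale brace =
  fixes B :: "'a brace_str"
  assumes br: "is_brace B"
begin

abbreviation A where "A \<equiv> addgrp B"
abbreviation Mu where "Mu \<equiv> mulgrp B"

lemma grpA: "group A" using br unfolding is_brace_def by blast
lemma grpMu: "group Mu" using br unfolding is_brace_def by blast

sublocale A: group A by (rule grpA)
sublocale Mu: group Mu by (rule grpMu)

lemma carrier_A [simp]: "carrier A = bcar B" by (simp add: addgrp_def)
lemma carrier_Mu [simp]: "carrier Mu = bcar B" by (simp add: mulgrp_def)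
lemma mult_A: "x \<otimes>\<^bsub>A\<^esub> y = bplus B x y" by (simp add: addgrp_def)
lemma mult_Mu: "x \<otimes>\<^bsub>Mu\<^esub> y = btimes B x y" by (simp add: mulgrp_def)

lemma A_closed [simp]:
  "x \<in> bcar B \<Longrightarrow> y \<in> bcar B \<Longrightarrow> x \<otimes>\<^bsub>A\<^esub> y \<in> bcar B"
  "x \<in> bcar B \<Longrightarrow> inv\<^bsub>A\<^esub> x \<in> bcar B"
  "x \<in> bcar B \<Longrightarrow> x [^]\<^bsub>A\<^esub> (k::int) \<in> bcar B"
  "x \<in> bcar B \<Longrightarrow> x [^]\<^bsub>A\<^esub> (n::nat) \<in> bcar B"
  "\<one>\<^bsub>A\<^esub> \<in> bcar B"
  using A.m_closed A.inv_closed A.int_pow_closed A.nat_pow_closed A.one_closed by auto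

lemma Mu_closed [simp]:
  "x \<in> bcar B \<Longrightarrow> y \<in> bcar B \<Longrightarrow> x \<otimes>\<^bsub>Mu\<^esub> y \<in> bcar B"
  "x \<in> bcar B \<Longrightarrow> inv\<^bsub>Mu\<^esub> x \<in> bcar B"
  "x \<in> bcar B \<Longrightarrow> x [^]\<^bsub>Mu\<^esub> (k::int) \<in> bcar B"
  "x \<in> bcar B \<Longrightarrow> x [^]\<^bsub>Mu\<^esub> (n::nat) \<in> bcar B"
  "\<one>\<^bsub>Mu\<^esub> \<in> bcar B"
  using Mu.m_closed Mu.inv_closed Mu.int_pow_closed Mu.nat_pow_closed Mu.one_closed by auto

lemma A_cancel [simp]:
  "x \<in> bcar B \<Longrightarrow> y \<in> bcar B \<Longrightarrow> x \<otimes>\<^bsub>A\<^esub> (inv\<^bsub>A\<^esub> x \<otimes>\<^bsub>A\<^esub> y) = y"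
  "x \<in> bcar B \<Longrightarrow> y \<in> bcar B \<Longrightarrow> inv\<^bsub>A\<^esub> x \<otimes>\<^bsub>A\<^esub> (x \<otimes>\<^bsub>A\<^esub> y) = y"
  by (simp_all add: A.m_assoc[symmetric])

lemma Mu_cancel [simp]:
  "x \<in> bcar B \<Longrightarrow> y \<in> bcar B \<Longrightarrow> x \<otimes>\<^bsub>Mu\<^esub> (inv\<^bsub>Mu\<^esub> x \<otimes>\<^bsub>Mu\<^esub> y) = y"
  "x \<in> bcar B \<Longrightarrow> y \<in> bcar B \<Longrightarrow> inv\<^bsub>Mu\<^esub> x \<otimes>\<^bsub>Mu\<^esub> (x \<otimes>\<^bsub>Mu\<^esub> y) = y"
  by (simp_all add: Mu.m_assoc[symmetric])

lemma ax: "a \<in> bcar B \<Longrightarrow> b \<in> bcar B \<Longrightarrow> c \<in> bcar B \<Longrightarrow>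
   a \<otimes>\<^bsub>Mu\<^esub> (b \<otimes>\<^bsub>A\<^esub> c) = a \<otimes>\<^bsub>Mu\<^esub> b \<otimes>\<^bsub>A\<^esub> inv\<^bsub>A\<^esub> a \<otimes>\<^bsub>A\<^esub> (a \<otimes>\<^bsub>Mu\<^esub> c)"
  using br unfolding is_brace_def by (simp add: mult_A mult_Mu)

lemma one_eq: "\<one>\<^bsub>Mu\<^esub> = \<one>\<^bsub>A\<^esub>"
proof -
  have e: "\<one>\<^bsub>Mu\<^esub> \<in> bcar B" using Mu.one_closed by simp
  have z: "\<one>\<^bsub>A\<^esub> \<in> bcar B" using A.one_closed by simp
  have "\<one>\<^bsub>Mu\<^esub> \<otimes>\<^bsub>Mu\<^esub> (\<one>\<^bsub>A\<^esub> \<otimes>\<^bsub>A\<^esub> \<one>\<^bsub>A\<^esub>) =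
     \<one>\<^bsub>Mu\<^esub> \<otimes>\<^bsub>Mu\<^esub> \<one>\<^bsub>A\<^esub> \<otimes>\<^bsub>A\<^esub> inv\<^bsub>A\<^esub> \<one>\<^bsub>Mu\<^esub> \<otimes>\<^bsub>A\<^esub> (\<one>\<^bsub>Mu\<^esub> \<otimes>\<^bsub>Mu\<^esub> \<one>\<^bsub>A\<^esub>)"
    using ax[OF e z z] .
  then have "\<one>\<^bsub>A\<^esub> = inv\<^bsub>A\<^esub> \<one>\<^bsub>Mu\<^esub>"
    using e z A.l_one A.r_one Mu.l_one
    by (metis A.inv_closed A.one_closed carrier_A carrier_Mu)
  then show ?thesis using e by (metis A.inv_inv A.inv_one carrier_A)
qed

definition lam :: "'a \<Rightarrow> 'a \<Rightarrow> 'a" where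
  "lam a b = inv\<^bsub>A\<^esub> a \<otimes>\<^bsub>A\<^esub> (a \<otimes>\<^bsub>Mu\<^esub> b)"

lemma lam_blambda: "blambda B a b = lam a b"
  unfolding blambda_def lam_def by (simp add: mult_A mult_Mu)

lemma lam_closed [simp]: "a \<in> bcar B \<Longrightarrow> b \<in> bcar B \<Longrightarrow> lam a b \<in> bcar B"
  unfolding lam_def using A.m_closed A.inv_closed Mu.m_closed by simp

lemma mul_lam: "a \<in> bcar B \<Longrightarrow> b \<in> bcar B \<Longrightarrow> a \<otimes>\<^bsub>Mu\<^esub> b = a \<otimes>\<^bsub>A\<^esub> lam a b"
  unfolding lam_def using A.m_closed A.inv_closed Mu.m_closed
  by (simp add: A.m_assoc[symmetric])

lemma lam_add:
  assumes a: "a \<in> bcar B" and b: "b \<in> bcar B" and c: "c \<in> bcar B"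
  shows "lam a (b \<otimes>\<^bsub>A\<^esub> c) = lam a b \<otimes>\<^bsub>A\<^esub> lam a c"
proof -
  have ab: "a \<otimes>\<^bsub>Mu\<^esub> b \<in> bcar B" and ac: "a \<otimes>\<^bsub>Mu\<^esub> c \<in> bcar B" and ia: "inv\<^bsub>A\<^esub> a \<in> bcar B"
    using a b c Mu.m_closed A.inv_closed by auto
  have "lam a (b \<otimes>\<^bsub>A\<^esub> c) = inv\<^bsub>A\<^esub> a \<otimes>\<^bsub>A\<^esub> (a \<otimes>\<^bsub>Mu\<^esub> b \<otimes>\<^bsub>A\<^esub> inv\<^bsub>A\<^esub> a \<otimes>\<^bsub>A\<^esub> (a \<otimes>\<^bsub>Mu\<^esub> c))"
    unfolding lam_def using ax[OF a b c] by simp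
  also have "\<dots> = lam a b \<otimes>\<^bsub>A\<^esub> lam a c"
    unfolding lam_def using ab ac ia by (simp add: A.m_assoc)
  finally show ?thesis .
qed

lemma lam_hom: "a \<in> bcar B \<Longrightarrow> lam a \<in> hom A A"
  by (rule homI) (simp_all add: lam_add)

lemma lam_one_el [simp]: "a \<in> bcar B \<Longrightarrow> lam a \<one>\<^bsub>A\<^esub> = \<one>\<^bsub>A\<^esub>"
  using group_hom.hom_one[of A A "lam a"] lam_hom grpA
  by (simp add: group_hom_axioms_def group_hom_def)

lemma lam_inv: "a \<in> bcar B \<Longrightarrow> b \<in> bcar B \<Longrightarrow> lam a (inv\<^bsub>A\<^esub> b) = inv\<^bsub>A\<^esub> (lam a b)"
  using group_hom.hom_inv[of A A "lam a" b] lam_hom grpA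
  by (simp add: group_hom_axioms_def group_hom_def)

lemma lam_pow: "a \<in> bcar B \<Longrightarrow> b \<in> bcar B \<Longrightarrow> lam a (b [^]\<^bsub>A\<^esub> (k::int)) = (lam a b) [^]\<^bsub>A\<^esub> k"
  using hom_int_pow[OF lam_hom _ grpA grpA, of a b k] by simp

lemma lam_1: "b \<in> bcar B \<Longrightarrow> lam \<one>\<^bsub>A\<^esub> b = b"
  unfolding lam_def using Mu.l_one[of b] one_eq by simp

lemma lam_comp:
  assumes a: "a \<in> bcar B" and b: "b \<in> bcar B" and c: "c \<in> bcar B"
  shows "lam a (lam b c) = lam (a \<otimes>\<^bsub>Mu\<^esub> b) c"
proof -
  have ab: "a \<otimes>\<^bsub>Mu\<^esub> b \<in> bcar B" and bc: "b \<otimes>\<^bsub>Mu\<^esub> c \<in> bcar B"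
    using a b c Mu.m_closed by auto
  have ib: "inv\<^bsub>A\<^esub> b \<in> bcar B" using b A.inv_closed by simp
  have "lam a (lam b c) = lam a (inv\<^bsub>A\<^esub> b) \<otimes>\<^bsub>A\<^esub> lam a (b \<otimes>\<^bsub>Mu\<^esub> c)"
    unfolding lam_def[of b c] using lam_add[OF a ib bc] .
  also have "\<dots> = inv\<^bsub>A\<^esub> (lam a b) \<otimes>\<^bsub>A\<^esub> lam a (b \<otimes>\<^bsub>Mu\<^esub> c)" using lam_inv[OF a b] by simp
  also have "\<dots> = inv\<^bsub>A\<^esub> (a \<otimes>\<^bsub>Mu\<^esub> b) \<otimes>\<^bsub>A\<^esub> a \<otimes>\<^bsub>A\<^esub> (inv\<^bsub>A\<^esub> a \<otimes>\<^bsub>A\<^esub> (a \<otimes>\<^bsub>Mu\<^esub> (b \<otimes>\<^bsub>Mu\<^esub> c)))"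
    unfolding lam_def using a ab A.inv_mult_group A.inv_inv A.inv_closed by simp
  also have "\<dots> = inv\<^bsub>A\<^esub> (a \<otimes>\<^bsub>Mu\<^esub> b) \<otimes>\<^bsub>A\<^esub> (a \<otimes>\<^bsub>Mu\<^esub> b \<otimes>\<^bsub>Mu\<^esub> c)"
    using a b c ab bc A.inv_closed Mu.m_closed by (simp add: A.m_assoc Mu.m_assoc A.r_inv_ex)
  finally show ?thesis unfolding lam_def .
qed


lemma lam_inv_cancel:
  assumes a: "a \<in> bcar B" and b: "b \<in> bcar B"
  shows "lam (inv\<^bsub>Mu\<^esub> a) (lam a b) = b" and "lam a (lam (inv\<^bsub>Mu\<^esub> a) b) = b"
proof -
  have ia: "inv\<^bsub>Mu\<^esub> a \<in> bcar B" using a by simp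
  show "lam (inv\<^bsub>Mu\<^esub> a) (lam a b) = b"
    using lam_comp[OF ia a b] Mu.l_inv[of a] a b lam_1 one_eq by simp
  show "lam a (lam (inv\<^bsub>Mu\<^esub> a) b) = b"
    using lam_comp[OF a ia b] Mu.r_inv[of a] a b lam_1 one_eq by simp
qed

lemma inv_Mu_lam:
  assumes a: "a \<in> bcar B"
  shows "inv\<^bsub>Mu\<^esub> a = inv\<^bsub>A\<^esub> (lam (inv\<^bsub>Mu\<^esub> a) a)"
proof -
  have ia: "inv\<^bsub>Mu\<^esub> a \<in> bcar B" using a by simp
  have "inv\<^bsub>Mu\<^esub> a \<otimes>\<^bsub>A\<^esub> lam (inv\<^bsub>Mu\<^esub> a) a = \<one>\<^bsub>A\<^esub>"
    using mul_lam[OF ia a] Mu.l_inv[of a] a one_eq by simp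
  then have "inv\<^bsub>A\<^esub> (lam (inv\<^bsub>Mu\<^esub> a) a) = inv\<^bsub>Mu\<^esub> a"
    using A.inv_equality[of "inv\<^bsub>Mu\<^esub> a" "lam (inv\<^bsub>Mu\<^esub> a) a"] a ia by simp
  then show ?thesis by simp
qed

lemma ideal_A: "is_ideal B I \<Longrightarrow> I \<lhd> A" unfolding is_ideal_def by blast
lemma ideal_Mu: "is_ideal B I \<Longrightarrow> I \<lhd> Mu" unfolding is_ideal_def by blast
lemma ideal_lam: "is_ideal B I \<Longrightarrow> b \<in> bcar B \<Longrightarrow> x \<in> I \<Longrightarrow> lam b x \<in> I"
  unfolding is_ideal_def lam_blambda by blast
lemma ideal_SA: "is_ideal B I \<Longrightarrow> subgroup I A" by (rule normal_imp_subgroup[OF ideal_A])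
lemma ideal_SMu: "is_ideal B I \<Longrightarrow> subgroup I Mu" by (rule normal_imp_subgroup[OF ideal_Mu])
lemma ideal_sub: "is_ideal B I \<Longrightarrow> I \<subseteq> bcar B"
  using subgroup.subset[OF ideal_SA] by simp
lemma idealI: "I \<lhd> A \<Longrightarrow> I \<lhd> Mu \<Longrightarrow> (\<And>b x. b \<in> bcar B \<Longrightarrow> x \<in> I \<Longrightarrow> lam b x \<in> I) \<Longrightarrow> is_ideal B I"
  unfolding is_ideal_def lam_blambda by blast

lemma ideal_lcoset:
  assumes I: "is_ideal B I" and x: "x \<in> bcar B"
  shows "x <#\<^bsub>Mu\<^esub> I = x <#\<^bsub>A\<^esub> I"
proof
  have Is: "I \<subseteq> bcar B" using ideal_sub[OF I] .
  show "x <#\<^bsub>Mu\<^esub> I \<subseteq> x <#\<^bsub>A\<^esub> I"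
  proof
    fix y assume "y \<in> x <#\<^bsub>Mu\<^esub> I"
    then obtain i where i: "i \<in> I" "y = x \<otimes>\<^bsub>Mu\<^esub> i" unfolding l_coset_def by blast
    have "i \<in> bcar B" using i(1) Is by blast
    then have "y = x \<otimes>\<^bsub>A\<^esub> lam x i" using mul_lam x i(2) by simp
    moreover have "lam x i \<in> I" using ideal_lam[OF I x i(1)] .
    ultimately show "y \<in> x <#\<^bsub>A\<^esub> I" unfolding l_coset_def by blast
  qed
  show "x <#\<^bsub>A\<^esub> I \<subseteq> x <#\<^bsub>Mu\<^esub> I"
  proof
    fix y assume "y \<in> x <#\<^bsub>A\<^esub> I"
    then obtain j where j: "j \<in> I" "y = x \<otimes>\<^bsub>A\<^esub> j" unfolding l_coset_def by blast
    have jb: "j \<in> bcar B" using j(1) Is by blast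
    define i where "i = lam (inv\<^bsub>Mu\<^esub> x) j"
    have iI: "i \<in> I" unfolding i_def using ideal_lam[OF I _ j(1)] x by simp
    have "lam x i = j" unfolding i_def using lam_inv_cancel(2)[OF x jb] .
    then have "y = x \<otimes>\<^bsub>Mu\<^esub> i" using mul_lam[OF x] iI Is j(2) by auto
    then show "y \<in> x <#\<^bsub>Mu\<^esub> I" using iI unfolding l_coset_def by blast
  qed
qed

lemma ideal_rcoset:
  assumes I: "is_ideal B I" and x: "x \<in> bcar B"
  shows "I #>\<^bsub>Mu\<^esub> x = I #>\<^bsub>A\<^esub> x"
proof -
  have "I #>\<^bsub>A\<^esub> x = x <#\<^bsub>A\<^esub> I" using normal.coset_eq[OF ideal_A[OF I]] x by simp
  moreover have "I #>\<^bsub>Mu\<^esub> x = x <#\<^bsub>Mu\<^esub> I" using normal.coset_eq[OF ideal_Mu[OF I]] x by simp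
  ultimately show ?thesis using ideal_lcoset[OF I x] by simp
qed

lemma quot_carrier_eq:
  assumes L: "is_ideal B L" and M: "M \<subseteq> bcar B"
  shows "carrier (Mu\<lparr>carrier := M\<rparr> Mod L) = carrier (A\<lparr>carrier := M\<rparr> Mod L)"
proof -
  have "(\<lambda>x. L #>\<^bsub>Mu\<^esub> x) ` M = (\<lambda>x. L #>\<^bsub>A\<^esub> x) ` M"
    using ideal_rcoset[OF L] M by (intro image_cong) auto
  then show ?thesis by (simp add: carrier_FactGroup)
qed

lemma subbrace:
  assumes S: "subgroup S A" and inv: "\<And>b x. b \<in> bcar B \<Longrightarrow> x \<in> S \<Longrightarrow> lam b x \<in> S"
  shows "subgroup S Mu"
proof (rule Mu.subgroupI)
  have Ss: "S \<subseteq> bcar B" using subgroup.subset[OF S] by simp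
  show "S \<subseteq> carrier Mu" using Ss by simp
  show "S \<noteq> {}" using subgroup.one_closed[OF S] by blast
next
  fix a assume a: "a \<in> S"
  have ab: "a \<in> bcar B" using a subgroup.subset[OF S] by auto
  have "lam (inv\<^bsub>Mu\<^esub> a) a \<in> S" using inv a ab by simp
  then have h: "inv\<^bsub>A\<^esub> (lam (inv\<^bsub>Mu\<^esub> a) a) \<in> S" by (rule subgroup.m_inv_closed[OF S])
  have e: "inv\<^bsub>Mu\<^esub> a = inv\<^bsub>A\<^esub> (lam (inv\<^bsub>Mu\<^esub> a) a)" using inv_Mu_lam[OF ab] .
  show "inv\<^bsub>Mu\<^esub> a \<in> S" using h e by metis
next
  fix a b assume a: "a \<in> S" and b: "b \<in> S"
  have ab: "a \<in> bcar B" "b \<in> bcar B" using a b subgroup.subset[OF S] by auto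
  have "lam a b \<in> S" using inv ab(1) b by simp
  then show "a \<otimes>\<^bsub>Mu\<^esub> b \<in> S" using mul_lam[OF ab] subgroup.m_closed[OF S a] by simp
qed

end

context brace begin

lemma qpA: "is_ideal B L \<Longrightarrow> subgroup N A \<Longrightarrow> L \<subseteq> N \<Longrightarrow> qpair A L N"
  by (rule A.qpairI[OF ideal_A])

lemma qpMu: "is_ideal B L \<Longrightarrow> subgroup N Mu \<Longrightarrow> L \<subseteq> N \<Longrightarrow> qpair Mu L N"
  by (rule Mu.qpairI[OF ideal_Mu])

definition lamtriv :: "'a set \<Rightarrow> 'a set \<Rightarrow> bool" where
  "lamtriv L M \<longleftrightarrow> (\<forall>x\<in>M. \<forall>y\<in>M. lam x y \<otimes>\<^bsub>A\<^esub> inv\<^bsub>A\<^esub> y \<in> L)"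

lemma Ztrans:
  assumes L: "is_ideal B L" and M: "is_ideal B M" and LM: "L \<subseteq> M"
    and lt: "lamtriv L M" and cz: "A.cycq L M z n"
  shows "Mu.cycq L M z n"
proof -
  interpret Q: qpair A L M using qpA[OF L ideal_SA[OF M] LM] .
  have Ms: "M \<subseteq> bcar B" using ideal_sub[OF M] .
  have MS: "subgroup M Mu" using ideal_SMu[OF M] .
  have zM: "z \<in> M" using cz unfolding A.cycq_def by blast
  have hom: "(\<lambda>x. L #>\<^bsub>A\<^esub> x) \<in> hom (Mu\<lparr>carrier := M\<rparr>) Q.K"
  proof (rule homI)
    fix a assume "a \<in> carrier (Mu\<lparr>carrier := M\<rparr>)"
    then show "L #>\<^bsub>A\<^esub> a \<in> carrier Q.K" using Q.inK by simp
  next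
    fix a b assume a: "a \<in> carrier (Mu\<lparr>carrier := M\<rparr>)" and b: "b \<in> carrier (Mu\<lparr>carrier := M\<rparr>)"
    then have aM: "a \<in> M" and bM: "b \<in> M" by auto
    have ab: "a \<in> bcar B" "b \<in> bcar B" using aM bM Ms by auto
    have lM: "lam a b \<in> M" using ideal_lam[OF M ab(1) bM] .
    have "L #>\<^bsub>A\<^esub> lam a b = L #>\<^bsub>A\<^esub> b" using Q.eq_K[OF lM bM] lt aM bM unfolding lamtriv_def by blast
    then have "L #>\<^bsub>A\<^esub> (a \<otimes>\<^bsub>Mu\<^esub> b) = (L #>\<^bsub>A\<^esub> a) \<otimes>\<^bsub>Q.K\<^esub> (L #>\<^bsub>A\<^esub> b)"
      using mul_lam[OF ab] Q.mult_K[OF aM lM] by simp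
    then show "L #>\<^bsub>A\<^esub> (a \<otimes>\<^bsub>Mu\<lparr>carrier := M\<rparr>\<^esub> b) = (L #>\<^bsub>A\<^esub> a) \<otimes>\<^bsub>Q.K\<^esub> (L #>\<^bsub>A\<^esub> b)" by simp
  qed
  have gM: "group (Mu\<lparr>carrier := M\<rparr>)" using Mu.subgroup_imp_group[OF MS] .
  have pw: "L #>\<^bsub>A\<^esub> (z [^]\<^bsub>Mu\<^esub> k) = L #>\<^bsub>A\<^esub> (z [^]\<^bsub>A\<^esub> k)" for k :: int
  proof -
    have "L #>\<^bsub>A\<^esub> (z [^]\<^bsub>Mu\<lparr>carrier := M\<rparr>\<^esub> k) = (L #>\<^bsub>A\<^esub> z) [^]\<^bsub>Q.K\<^esub> k"
      using hom_int_pow[OF hom _ gM Q.KG] zM by simp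
    then show ?thesis using Mu.int_pow_consistent[OF MS zM] Q.pow_K[OF zM] by simp
  qed
  have zjM: "z [^]\<^bsub>Mu\<^esub> (j::int) \<in> M" for j using Mu.subgroup_int_pow_closed[OF MS zM] .
  have zjMA: "z [^]\<^bsub>A\<^esub> (j::int) \<in> M" for j using Q.pow_in_N[OF zM] .
  have co: "L #>\<^bsub>Mu\<^esub> x = L #>\<^bsub>A\<^esub> x" if "x \<in> M" for x using ideal_rcoset[OF L] that Ms by blast
  interpret QM: qpair Mu L M using qpMu[OF L MS LM] .
  show ?thesis
    unfolding Mu.cycq_def
  proof (intro conjI ballI allI)
    show "z \<in> M" using zM .
  next
    fix x assume x: "x \<in> M"
    obtain j :: int where j: "x \<otimes>\<^bsub>A\<^esub> inv\<^bsub>A\<^esub> (z [^]\<^bsub>A\<^esub> j) \<in> L" using cz x unfolding A.cycq_def by blast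
    have "L #>\<^bsub>A\<^esub> x = L #>\<^bsub>A\<^esub> (z [^]\<^bsub>A\<^esub> j)" using Q.eq_K[OF x zjMA] j by simp
    then have "L #>\<^bsub>Mu\<^esub> x = L #>\<^bsub>Mu\<^esub> (z [^]\<^bsub>Mu\<^esub> j)" using co[OF x] co[OF zjM] pw by simp
    then show "\<exists>j::int. x \<otimes>\<^bsub>Mu\<^esub> inv\<^bsub>Mu\<^esub> (z [^]\<^bsub>Mu\<^esub> j) \<in> L" using QM.eq_K[OF x zjM] by blast
  next
    fix j :: int
    have "z [^]\<^bsub>Mu\<^esub> j \<in> L \<longleftrightarrow> L #>\<^bsub>A\<^esub> (z [^]\<^bsub>Mu\<^esub> j) = L" using Q.eq1_K[OF zjM] by simp
    also have "\<dots> \<longleftrightarrow> z [^]\<^bsub>A\<^esub> j \<in> L" using pw Q.eq1_K[OF zjMA] by simp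
    also have "\<dots> \<longleftrightarrow> int n dvd j" using cz unfolding A.cycq_def by blast
    finally show "z [^]\<^bsub>Mu\<^esub> j \<in> L \<longleftrightarrow> int n dvd j" .
  qed
qed

lemma eqT:
  assumes L: "is_ideal B L" and N: "is_ideal B N"
    and TA: "T \<lhd> A" and LT: "L \<subseteq> T" and TN: "T \<subseteq> N"
    and Tlam: "\<And>b x. b \<in> bcar B \<Longrightarrow> x \<in> T \<Longrightarrow> lam b x \<in> T"
    and cT: "card (carrier (A\<lparr>carrier := T\<rparr> Mod L)) = r" and r0: "r > 0"
    and T'M: "T' \<lhd> Mu" and LT': "L \<subseteq> T'" and cT': "card (carrier (Mu\<lparr>carrier := T'\<rparr> Mod L)) = r"
    and T'def: "T' = {x \<in> N. x [^]\<^bsub>Mu\<^esub> r \<in> L}"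
  shows "T = T'"
proof -
  have TSA: "subgroup T A" using normal_imp_subgroup[OF TA] .
  have TS: "subgroup T Mu" using subbrace[OF TSA Tlam] .
  have T'S: "subgroup T' Mu" using normal_imp_subgroup[OF T'M] .
  have Ts: "T \<subseteq> bcar B" using subgroup.subset[OF TSA] by simp
  have T's: "T' \<subseteq> bcar B" using subgroup.subset[OF T'S] by simp
  interpret Q: qpair Mu L T using qpMu[OF L TS LT] .
  interpret Q': qpair Mu L T' using qpMu[OF L T'S LT'] .
  have cQ: "card (carrier Q.K) = r" using quot_carrier_eq[OF L Ts] cT by simp
  have finQ: "finite (carrier Q.K)" using cQ r0 card_ge_0_finite by auto
  have sub: "T \<subseteq> T'"
  proof
    fix x assume x: "x \<in> T"
    have xK: "L #>\<^bsub>Mu\<^esub> x \<in> carrier Q.K" using Q.inK[OF x] .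
    have "(L #>\<^bsub>Mu\<^esub> x) [^]\<^bsub>Q.K\<^esub> r = \<one>\<^bsub>Q.K\<^esub>"
      using group.pow_order_eq_1[OF Q.KG xK] cQ unfolding order_def by simp
    then have "L #>\<^bsub>Mu\<^esub> (x [^]\<^bsub>Mu\<^esub> r) = L" using Q.npow_K[OF x] by simp
    moreover have "x [^]\<^bsub>Mu\<^esub> r \<in> T"
      using Mu.subgroup_int_pow_closed[OF TS x, of "int r"] by (simp add: int_pow_int)
    ultimately have "x [^]\<^bsub>Mu\<^esub> r \<in> L" using Q.eq1_K by blast
    then show "x \<in> T'" unfolding T'def using x TN by blast
  qed
  have csub: "carrier Q.K \<subseteq> carrier Q'.K" using sub unfolding Q.carrier_K Q'.carrier_K by blast
  have "carrier Q.K = carrier Q'.K" using card_subset_eq[OF _ csub] cQ cT'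
    by (metis card.infinite r0 not_gr_zero)
  show ?thesis
  proof
    show "T \<subseteq> T'" using sub .
    show "T' \<subseteq> T"
    proof
      fix x assume x: "x \<in> T'"
      have "L #>\<^bsub>Mu\<^esub> x \<in> carrier Q.K" using Q'.inK[OF x] \<open>carrier Q.K = carrier Q'.K\<close> by simp
      then obtain y where y: "y \<in> T" "L #>\<^bsub>Mu\<^esub> x = L #>\<^bsub>Mu\<^esub> y" using Q.carrier_K by auto
      have yT': "y \<in> T'" using sub y(1) by blast
      have "x \<otimes>\<^bsub>Mu\<^esub> inv\<^bsub>Mu\<^esub> y \<in> L" using Q'.eq_K[OF x yT'] y(2) by simp
      then have "x \<otimes>\<^bsub>Mu\<^esub> inv\<^bsub>Mu\<^esub> y \<in> T" using LT by blast
      then have "x \<otimes>\<^bsub>Mu\<^esub> inv\<^bsub>Mu\<^esub> y \<otimes>\<^bsub>Mu\<^esub> y \<in> T" using subgroup.m_closed[OF TS _ y(1)] by blast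
      moreover have "x \<otimes>\<^bsub>Mu\<^esub> inv\<^bsub>Mu\<^esub> y \<otimes>\<^bsub>Mu\<^esub> y = x"
      proof -
        have xb: "x \<in> bcar B" using x T's by blast
        have yb: "y \<in> bcar B" using y(1) Ts by blast
        show ?thesis using xb yb by (simp add: Mu.m_assoc)
      qed
      ultimately show "x \<in> T" by simp
    qed
  qed
qed

end

context brace begin

lemma lam_compat:
  assumes I: "is_ideal B I" and J: "is_ideal B J" and IJ: "I \<subseteq> J" and x: "x \<in> bcar B"
    and y: "y \<in> J" and y': "y' \<in> J" and e: "I #>\<^bsub>A\<^esub> y = I #>\<^bsub>A\<^esub> y'"
  shows "I #>\<^bsub>A\<^esub> lam x y = I #>\<^bsub>A\<^esub> lam x y'"
proof -
  interpret Q: qpair A I J using qpA[OF I ideal_SA[OF J] IJ] .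
  have Js: "J \<subseteq> bcar B" using ideal_sub[OF J] .
  have yb: "y \<in> bcar B" "y' \<in> bcar B" using y y' Js by auto
  have "y \<otimes>\<^bsub>A\<^esub> inv\<^bsub>A\<^esub> y' \<in> I" using Q.eq_K[OF y y'] e by simp
  then have "lam x (y \<otimes>\<^bsub>A\<^esub> inv\<^bsub>A\<^esub> y') \<in> I" using ideal_lam[OF I x] by blast
  then have "lam x y \<otimes>\<^bsub>A\<^esub> inv\<^bsub>A\<^esub> (lam x y') \<in> I" using lam_add[OF x] lam_inv[OF x] yb by simp
  moreover have "lam x y \<in> J" "lam x y' \<in> J" using ideal_lam[OF J x] y y' by auto
  ultimately show ?thesis using Q.eq_K by blast
qed

lemma PM1:
  assumes I: "is_ideal B I" and J: "is_ideal B J" and IJ: "I \<subseteq> J"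
    and cg: "A.cycq I J g 0" and x: "x \<in> bcar B"
  shows "\<exists>\<epsilon>::int. (\<epsilon> = 1 \<or> \<epsilon> = -1) \<and> (\<forall>y\<in>J. I #>\<^bsub>A\<^esub> lam x y = I #>\<^bsub>A\<^esub> (y [^]\<^bsub>A\<^esub> \<epsilon>))"
proof -
  interpret Q: qpair A I J using qpA[OF I ideal_SA[OF J] IJ] .
  have Js: "J \<subseteq> bcar B" using ideal_sub[OF J] .
  have gY: "g \<in> J" using cg unfolding A.cycq_def by blast
  have gb: "g \<in> bcar B" using gY Js by blast
  have gK: "I #>\<^bsub>A\<^esub> g \<in> carrier Q.K" using Q.inK[OF gY] .
  have ix: "inv\<^bsub>Mu\<^esub> x \<in> bcar B" using x by simp
  have lY: "lam a b \<in> J" if "a \<in> bcar B" "b \<in> J" for a b using ideal_lam[OF J that] .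
  have gj: "g [^]\<^bsub>A\<^esub> (j::int) \<in> J" for j using Q.pow_in_N[OF gY] .
  obtain k :: int where k: "lam x g \<otimes>\<^bsub>A\<^esub> inv\<^bsub>A\<^esub> (g [^]\<^bsub>A\<^esub> k) \<in> I"
    using cg lY[OF x gY] unfolding A.cycq_def by blast
  then have k': "I #>\<^bsub>A\<^esub> lam x g = I #>\<^bsub>A\<^esub> (g [^]\<^bsub>A\<^esub> k)" using Q.eq_K[OF lY[OF x gY] gj] by simp
  obtain m :: int where m: "lam (inv\<^bsub>Mu\<^esub> x) g \<otimes>\<^bsub>A\<^esub> inv\<^bsub>A\<^esub> (g [^]\<^bsub>A\<^esub> m) \<in> I"
    using cg lY[OF ix gY] unfolding A.cycq_def by blast
  then have m': "I #>\<^bsub>A\<^esub> lam (inv\<^bsub>Mu\<^esub> x) g = I #>\<^bsub>A\<^esub> (g [^]\<^bsub>A\<^esub> m)" using Q.eq_K[OF lY[OF ix gY] gj] by simp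
  have powlam: "I #>\<^bsub>A\<^esub> lam x (g [^]\<^bsub>A\<^esub> j) = (I #>\<^bsub>A\<^esub> g) [^]\<^bsub>Q.K\<^esub> (k * j)" for j :: int
  proof -
    have "I #>\<^bsub>A\<^esub> lam x (g [^]\<^bsub>A\<^esub> j) = I #>\<^bsub>A\<^esub> ((lam x g) [^]\<^bsub>A\<^esub> j)" using lam_pow[OF x gb] by simp
    also have "\<dots> = (I #>\<^bsub>A\<^esub> lam x g) [^]\<^bsub>Q.K\<^esub> j" using Q.pow_K[OF lY[OF x gY]] by simp
    also have "\<dots> = (I #>\<^bsub>A\<^esub> (g [^]\<^bsub>A\<^esub> k)) [^]\<^bsub>Q.K\<^esub> j" using k' by simp
    also have "\<dots> = (I #>\<^bsub>A\<^esub> g) [^]\<^bsub>Q.K\<^esub> (k * j)"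
      using Q.pow_K[OF gY] group.int_pow_pow[OF Q.KG gK] by simp
    finally show ?thesis .
  qed
  have "I #>\<^bsub>A\<^esub> g = I #>\<^bsub>A\<^esub> lam x (lam (inv\<^bsub>Mu\<^esub> x) g)" using lam_inv_cancel(2)[OF x gb] by simp
  also have "\<dots> = I #>\<^bsub>A\<^esub> lam x (g [^]\<^bsub>A\<^esub> m)" using lam_compat[OF I J IJ x lY[OF ix gY] gj m'] .
  also have "\<dots> = (I #>\<^bsub>A\<^esub> g) [^]\<^bsub>Q.K\<^esub> (k * m)" using powlam .
  finally have "(I #>\<^bsub>A\<^esub> g) [^]\<^bsub>Q.K\<^esub> (k * m) = (I #>\<^bsub>A\<^esub> g) [^]\<^bsub>Q.K\<^esub> (1::int)"
    using group.int_pow_1[OF Q.KG gK] by simp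
  then have "int (group.ord Q.K (I #>\<^bsub>A\<^esub> g)) dvd 1 - k * m" using group.int_pow_eq[OF Q.KG gK] by blast
  then have "k * m = 1" using Q.cycq_ord[OF cg] by simp
  then have kpm: "k = 1 \<or> k = -1" using zmult_eq_1_iff by blast
  have "\<forall>y\<in>J. I #>\<^bsub>A\<^esub> lam x y = I #>\<^bsub>A\<^esub> (y [^]\<^bsub>A\<^esub> k)"
  proof
    fix y assume y: "y \<in> J"
    obtain j :: int where j: "y \<otimes>\<^bsub>A\<^esub> inv\<^bsub>A\<^esub> (g [^]\<^bsub>A\<^esub> j) \<in> I" using cg y unfolding A.cycq_def by blast
    have yg: "I #>\<^bsub>A\<^esub> y = I #>\<^bsub>A\<^esub> (g [^]\<^bsub>A\<^esub> j)" using Q.eq_K[OF y gj] j by simp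
    have "I #>\<^bsub>A\<^esub> lam x y = I #>\<^bsub>A\<^esub> lam x (g [^]\<^bsub>A\<^esub> j)" using lam_compat[OF I J IJ x y gj yg] .
    also have "\<dots> = (I #>\<^bsub>A\<^esub> g) [^]\<^bsub>Q.K\<^esub> (k * j)" using powlam .
    also have "\<dots> = ((I #>\<^bsub>A\<^esub> g) [^]\<^bsub>Q.K\<^esub> j) [^]\<^bsub>Q.K\<^esub> k"
      using group.int_pow_pow[OF Q.KG gK] by (simp add: mult.commute)
    also have "\<dots> = (I #>\<^bsub>A\<^esub> y) [^]\<^bsub>Q.K\<^esub> k" using yg Q.pow_K[OF gY] by simp
    also have "\<dots> = I #>\<^bsub>A\<^esub> (y [^]\<^bsub>A\<^esub> k)" using Q.pow_K[OF y] by simp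
    finally show "I #>\<^bsub>A\<^esub> lam x y = I #>\<^bsub>A\<^esub> (y [^]\<^bsub>A\<^esub> k)" .
  qed
  then show ?thesis using kpm by blast
qed

lemma PMit:
  assumes I: "is_ideal B I" and J: "is_ideal B J" and IJ: "I \<subseteq> J" and x: "x \<in> bcar B"
    and eps: "\<forall>y\<in>J. I #>\<^bsub>A\<^esub> lam x y = I #>\<^bsub>A\<^esub> (y [^]\<^bsub>A\<^esub> (\<epsilon>::int))"
  shows "\<forall>y\<in>J. I #>\<^bsub>A\<^esub> lam (x [^]\<^bsub>Mu\<^esub> (n::nat)) y = I #>\<^bsub>A\<^esub> (y [^]\<^bsub>A\<^esub> (\<epsilon> ^ n))"
proof (induction n)
  case 0
  have "lam (x [^]\<^bsub>Mu\<^esub> (0::nat)) y = y" if "y \<in> J" for y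
    using lam_1 one_eq that ideal_sub[OF J] by auto
  moreover have "y [^]\<^bsub>A\<^esub> (\<epsilon> ^ 0) = y" if "y \<in> J" for y using that ideal_sub[OF J] by auto
  ultimately show ?case by simp
next
  case (Suc n)
  interpret Q: qpair A I J using qpA[OF I ideal_SA[OF J] IJ] .
  have Js: "J \<subseteq> bcar B" using ideal_sub[OF J] .
  have xn: "x [^]\<^bsub>Mu\<^esub> n \<in> bcar B" using x by simp
  show ?case
  proof
    fix y assume y: "y \<in> J"
    have yb: "y \<in> bcar B" using y Js by blast
    have lxy: "lam x y \<in> J" using ideal_lam[OF J x y] .
    have ye: "y [^]\<^bsub>A\<^esub> \<epsilon> \<in> J" using Q.pow_in_N[OF y] .
    have "lam (x [^]\<^bsub>Mu\<^esub> Suc n) y = lam (x [^]\<^bsub>Mu\<^esub> n) (lam x y)"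
      using lam_comp[OF xn x yb] Mu.nat_pow_Suc by simp
    then have "I #>\<^bsub>A\<^esub> lam (x [^]\<^bsub>Mu\<^esub> Suc n) y = I #>\<^bsub>A\<^esub> lam (x [^]\<^bsub>Mu\<^esub> n) (y [^]\<^bsub>A\<^esub> \<epsilon>)"
      using lam_compat[OF I J IJ xn lxy ye] eps y by simp
    also have "\<dots> = I #>\<^bsub>A\<^esub> ((lam (x [^]\<^bsub>Mu\<^esub> n) y) [^]\<^bsub>A\<^esub> \<epsilon>)" using lam_pow[OF xn yb] by simp
    also have "\<dots> = (I #>\<^bsub>A\<^esub> lam (x [^]\<^bsub>Mu\<^esub> n) y) [^]\<^bsub>Q.K\<^esub> \<epsilon>"
      using Q.pow_K[OF ideal_lam[OF J xn y]] by simp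
    also have "\<dots> = (I #>\<^bsub>A\<^esub> (y [^]\<^bsub>A\<^esub> (\<epsilon> ^ n))) [^]\<^bsub>Q.K\<^esub> \<epsilon>" using Suc y by simp
    also have "\<dots> = I #>\<^bsub>A\<^esub> ((y [^]\<^bsub>A\<^esub> (\<epsilon> ^ n)) [^]\<^bsub>A\<^esub> \<epsilon>)" using Q.pow_K[OF Q.pow_in_N[OF y]] by simp
    also have "\<dots> = I #>\<^bsub>A\<^esub> (y [^]\<^bsub>A\<^esub> (\<epsilon> ^ Suc n))" using A.int_pow_pow yb by (simp add: mult.commute)
    finally show "I #>\<^bsub>A\<^esub> lam (x [^]\<^bsub>Mu\<^esub> Suc n) y = I #>\<^bsub>A\<^esub> (y [^]\<^bsub>A\<^esub> (\<epsilon> ^ Suc n))" .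
  qed
qed

lemma LT:
  assumes I: "is_ideal B I" and J: "is_ideal B J" and IJ: "I \<subseteq> J"
    and cg: "A.cycq I J g 0" and x: "x \<in> bcar B"
    and z: "z \<in> J" and zinf: "\<forall>j::int. z [^]\<^bsub>A\<^esub> j \<in> I \<longleftrightarrow> j = 0"
    and r: "odd r" and hz: "lam (x [^]\<^bsub>Mu\<^esub> (r::nat)) z \<otimes>\<^bsub>A\<^esub> inv\<^bsub>A\<^esub> z \<in> I"
  shows "\<forall>y\<in>J. lam x y \<otimes>\<^bsub>A\<^esub> inv\<^bsub>A\<^esub> y \<in> I"
proof -
  interpret Q: qpair A I J using qpA[OF I ideal_SA[OF J] IJ] .
  have Js: "J \<subseteq> bcar B" using ideal_sub[OF J] .
  have zb: "z \<in> bcar B" using z Js by blast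
  obtain \<epsilon> :: int where e1: "\<epsilon> = 1 \<or> \<epsilon> = -1" and eps: "\<forall>y\<in>J. I #>\<^bsub>A\<^esub> lam x y = I #>\<^bsub>A\<^esub> (y [^]\<^bsub>A\<^esub> \<epsilon>)"
    using PM1[OF I J IJ cg x] by blast
  have xr: "x [^]\<^bsub>Mu\<^esub> r \<in> bcar B" using x by simp
  have "I #>\<^bsub>A\<^esub> lam (x [^]\<^bsub>Mu\<^esub> r) z = I #>\<^bsub>A\<^esub> (z [^]\<^bsub>A\<^esub> (\<epsilon> ^ r))" using PMit[OF I J IJ x eps] z by blast
  moreover have "I #>\<^bsub>A\<^esub> lam (x [^]\<^bsub>Mu\<^esub> r) z = I #>\<^bsub>A\<^esub> z" using Q.eq_K[OF ideal_lam[OF J xr z] z] hz by simp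
  ultimately have "I #>\<^bsub>A\<^esub> (z [^]\<^bsub>A\<^esub> (\<epsilon> ^ r)) = I #>\<^bsub>A\<^esub> z" by simp
  then have "z [^]\<^bsub>A\<^esub> (\<epsilon> ^ r) \<otimes>\<^bsub>A\<^esub> inv\<^bsub>A\<^esub> (z [^]\<^bsub>A\<^esub> (1::int)) \<in> I"
    using Q.eq_K[OF Q.pow_in_N[OF z] z] zb by simp
  then have "z [^]\<^bsub>A\<^esub> (\<epsilon> ^ r - 1) \<in> I" using A.int_pow_diff zb by simp
  then have "\<epsilon> ^ r - 1 = 0" using zinf by blast
  then have "\<epsilon> = 1" using e1 r by auto
  then show ?thesis using eps Q.eq_K Js by (metis A.int_pow_1 ideal_lam[OF J x] carrier_A subsetD)
qed

end

context brace begin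

definition pft :: "nat \<Rightarrow> 'a set \<Rightarrow> 'a set \<Rightarrow> bool" where
  "pft p L M \<longleftrightarrow>
     (Factorial_Ring.prime (card (carrier (A\<lparr>carrier := M\<rparr> Mod L))) \<and> card (carrier (A\<lparr>carrier := M\<rparr> Mod L)) \<le> p)
     \<or> ((\<exists>z. A.cycq L M z 0) \<and> lamtriv L M)"

lemma powM:
  assumes M: "is_ideal B M" and N: "is_ideal B N" and MN: "M \<subseteq> N"
    and c: "card (carrier (A\<lparr>carrier := N\<rparr> Mod M)) = r" and r0: "r > 0" and x: "x \<in> N"
  shows "x [^]\<^bsub>Mu\<^esub> r \<in> M"
proof -
  interpret Q: qpair Mu M N using qpMu[OF M ideal_SMu[OF N] MN] .
  have cQ: "card (carrier Q.K) = r" using quot_carrier_eq[OF M ideal_sub[OF N]] c by simp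
  have xK: "M #>\<^bsub>Mu\<^esub> x \<in> carrier Q.K" using Q.inK[OF x] .
  have "(M #>\<^bsub>Mu\<^esub> x) [^]\<^bsub>Q.K\<^esub> r = \<one>\<^bsub>Q.K\<^esub>"
    using group.pow_order_eq_1[OF Q.KG xK] cQ unfolding order_def by simp
  then have "M #>\<^bsub>Mu\<^esub> (x [^]\<^bsub>Mu\<^esub> r) = M" using Q.npow_K[OF x] by simp
  moreover have "x [^]\<^bsub>Mu\<^esub> r \<in> N"
    using Mu.subgroup_int_pow_closed[OF ideal_SMu[OF N] x, of "int r"] by (simp add: int_pow_int)
  ultimately show ?thesis using Q.eq1_K by blast
qed

lemma Tsub:
  assumes L: "is_ideal B L"
    and TA: "T \<lhd> A" and LT: "L \<subseteq> T"
    and Tlam: "\<And>b x. b \<in> bcar B \<Longrightarrow> x \<in> T \<Longrightarrow> lam b x \<in> T"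
    and cT: "card (carrier (A\<lparr>carrier := T\<rparr> Mod L)) = r" and r0: "r > 0" and x: "x \<in> T"
  shows "x [^]\<^bsub>Mu\<^esub> r \<in> L"
proof -
  have TSA: "subgroup T A" using normal_imp_subgroup[OF TA] .
  have TS: "subgroup T Mu" using subbrace[OF TSA Tlam] .
  have Ts: "T \<subseteq> bcar B" using subgroup.subset[OF TSA] by simp
  interpret Q: qpair Mu L T using qpMu[OF L TS LT] .
  have cQ: "card (carrier Q.K) = r" using quot_carrier_eq[OF L Ts] cT by simp
  have xK: "L #>\<^bsub>Mu\<^esub> x \<in> carrier Q.K" using Q.inK[OF x] .
  have "(L #>\<^bsub>Mu\<^esub> x) [^]\<^bsub>Q.K\<^esub> r = \<one>\<^bsub>Q.K\<^esub>"
    using group.pow_order_eq_1[OF Q.KG xK] cQ unfolding order_def by simp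
  then have "L #>\<^bsub>Mu\<^esub> (x [^]\<^bsub>Mu\<^esub> r) = L" using Q.npow_K[OF x] by simp
  moreover have "x [^]\<^bsub>Mu\<^esub> r \<in> T"
    using Mu.subgroup_int_pow_closed[OF TS x, of "int r"] by (simp add: int_pow_int)
  ultimately show ?thesis using Q.eq1_K by blast
qed

lemma T_lam:
  assumes L: "is_ideal B L" and N: "is_ideal B N" and b: "b \<in> bcar B"
    and x: "x \<in> {x \<in> N. x [^]\<^bsub>A\<^esub> (r::nat) \<in> L}"
  shows "lam b x \<in> {x \<in> N. x [^]\<^bsub>A\<^esub> r \<in> L}"
proof -
  have xN: "x \<in> N" and xr: "x [^]\<^bsub>A\<^esub> r \<in> L" using x by auto
  have xb: "x \<in> bcar B" using xN ideal_sub[OF N] by blast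
  have "lam b (x [^]\<^bsub>A\<^esub> (int r)) \<in> L" using ideal_lam[OF L b] xr by (simp add: int_pow_int)
  then have "(lam b x) [^]\<^bsub>A\<^esub> r \<in> L" using lam_pow[OF b xb, of "int r"] by (simp add: int_pow_int)
  then show ?thesis using ideal_lam[OF N b xN] by simp
qed

lemma bswap:
  assumes p: "Factorial_Ring.prime p"
    and L: "is_ideal B L" and M: "is_ideal B M" and N: "is_ideal B N" and LM: "L \<subseteq> M" and MN: "M \<subseteq> N"
    and pf: "pft p L M"
    and rp: "Factorial_Ring.prime (card (carrier (A\<lparr>carrier := N\<rparr> Mod M)))"
    and rg: "card (carrier (A\<lparr>carrier := N\<rparr> Mod M)) > p"
  shows "(\<exists>M'. is_ideal B M' \<and> L \<subseteq> M' \<and> M' \<subseteq> N \<and>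
            card (carrier (A\<lparr>carrier := M'\<rparr> Mod L)) = card (carrier (A\<lparr>carrier := N\<rparr> Mod M)) \<and> pft p M' N)
         \<or> pft p L N"
proof -
  define r where "r = card (carrier (A\<lparr>carrier := N\<rparr> Mod M))"
  have r: "Factorial_Ring.prime r" using rp unfolding r_def .
  have rgt: "r > p" using rg unfolding r_def .
  have p2: "p \<ge> 2" using p prime_ge_2_nat by blast
  have rodd: "odd r" using prime_odd_nat[OF r] rgt p2 by simp
  have r0: "r > 0" using rgt by simp
  have Ns: "N \<subseteq> bcar B" using ideal_sub[OF N] .
  have LN: "L \<subseteq> N" using LM MN by (rule subset_trans)
  interpret QMN: qpair A M N using qpA[OF M ideal_SA[OF N] MN] .
  interpret QMNm: qpair Mu M N using qpMu[OF M ideal_SMu[OF N] MN] .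
  interpret QLM: qpair A L M using qpA[OF L ideal_SA[OF M] LM] .
  interpret QLMm: qpair Mu L M using qpMu[OF L ideal_SMu[OF M] LM] .
  have "\<exists>w. A.cycq M N w (card (carrier QMN.K))" using QMN.K_prime[OF rp] .
  then obtain w where cw: "A.cycq M N w r" unfolding r_def by auto
  have cMN: "card (carrier QMNm.K) = r" using quot_carrier_eq[OF M Ns] unfolding r_def by simp
  have "\<exists>w'. Mu.cycq M N w' (card (carrier QMNm.K))" using QMNm.K_prime r cMN by simp
  then obtain w' where cw': "Mu.cycq M N w' r" using cMN by auto
  have Tlam: "\<And>b x. b \<in> bcar B \<Longrightarrow> x \<in> {x \<in> N. x [^]\<^bsub>A\<^esub> r \<in> L} \<Longrightarrow> lam b x \<in> {x \<in> N. x [^]\<^bsub>A\<^esub> r \<in> L}"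
    using T_lam[OF L N] by blast
  have xrM: "x [^]\<^bsub>Mu\<^esub> r \<in> M" if "x \<in> N" for x using powM[OF M N MN _ r0 that] unfolding r_def by simp
  from pf[unfolded pft_def] show ?thesis
  proof
    assume sF: "Factorial_Ring.prime (card (carrier QLM.K)) \<and> card (carrier QLM.K) \<le> p"
    define s where "s = card (carrier QLM.K)"
    have s: "Factorial_Ring.prime s" "s \<le> p" using sF unfolding s_def by auto
    have "\<exists>z. A.cycq L M z (card (carrier QLM.K))" using QLM.K_prime sF by simp
    then obtain z where cz: "A.cycq L M z s" unfolding s_def by auto
    have cLMm: "card (carrier QLMm.K) = s" using quot_carrier_eq[OF L ideal_sub[OF M]] unfolding s_def by simp
    have "\<exists>z'. Mu.cycq L M z' (card (carrier QLMm.K))" using QLMm.K_prime s(1) cLMm by simp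
    then obtain z' where cz': "Mu.cycq L M z' s" using cLMm by auto
    have s1: "s - 1 > 0" using prime_ge_2_nat[OF s(1)] by simp
    have nc: "s = 0 \<or> (Factorial_Ring.prime s \<and> s \<noteq> r \<and> \<not> r dvd (s - 1))"
    proof -
      have "\<not> r dvd (s - 1)"
      proof
        assume "r dvd s - 1"
        then have "r \<le> s - 1" using s1 by (simp add: dvd_imp_le)
        then show False using s(2) rgt by simp
      qed
      then show ?thesis using s rgt by auto
    qed
    define TA where "TA = {x \<in> N. x [^]\<^bsub>A\<^esub> r \<in> L}"
    define TM where "TM = {x \<in> N. x [^]\<^bsub>Mu\<^esub> r \<in> L}"
    have GA: "(TA \<lhd> A \<and> L \<subseteq> TA \<and> card (carrier (A\<lparr>carrier := TA\<rparr> Mod L)) = r \<and> A.cycq TA N z s)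
       \<or> (s = 0 \<and> TA = L \<and> (\<exists>g. A.cycq L N g 0))"
      using A.gswap[OF ideal_A[OF L] ideal_A[OF M] ideal_A[OF N] LM MN cz cw r rodd nc] unfolding TA_def .
    have GM: "(TM \<lhd> Mu \<and> L \<subseteq> TM \<and> card (carrier (Mu\<lparr>carrier := TM\<rparr> Mod L)) = r \<and> Mu.cycq TM N z' s)
       \<or> (s = 0 \<and> TM = L \<and> (\<exists>g. Mu.cycq L N g 0))"
      using Mu.gswap[OF ideal_Mu[OF L] ideal_Mu[OF M] ideal_Mu[OF N] LM MN cz' cw' r rodd nc] unfolding TM_def .
    have s0: "s \<noteq> 0" using s(1) by auto
    have A1: "TA \<lhd> A" "L \<subseteq> TA" "card (carrier (A\<lparr>carrier := TA\<rparr> Mod L)) = r" "A.cycq TA N z s"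
      using GA s0 by auto
    have M1: "TM \<lhd> Mu" "L \<subseteq> TM" "card (carrier (Mu\<lparr>carrier := TM\<rparr> Mod L)) = r"
      using GM s0 by auto
    have TAN: "TA \<subseteq> N" unfolding TA_def by blast
    have TAlam: "\<And>b x. b \<in> bcar B \<Longrightarrow> x \<in> TA \<Longrightarrow> lam b x \<in> TA" using Tlam unfolding TA_def by blast
    have eq: "TA = TM" using eqT[OF L N A1(1) A1(2) TAN TAlam A1(3) r0 M1(1) M1(2) M1(3) TM_def] .
    have TAi: "is_ideal B TA" using idealI[OF A1(1)] M1(1) eq TAlam by simp
    interpret QTN: qpair A TA N using qpA[OF TAi ideal_SA[OF N] TAN] .
    have "card (carrier QTN.K) = s" using QTN.cycq_card[OF A1(4)] .
    then have "pft p TA N" unfolding pft_def using s by simp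
    then show ?thesis using TAi A1(2) TAN A1(3) unfolding r_def by blast
  next
    assume zZ: "(\<exists>z. A.cycq L M z 0) \<and> lamtriv L M"
    then obtain z where cz: "A.cycq L M z 0" and lt: "lamtriv L M" by blast
    have cz': "Mu.cycq L M z 0" using Ztrans[OF L M LM lt cz] .
    have zM: "z \<in> M" using cz unfolding A.cycq_def by blast
    have zN: "z \<in> N" using MN zM by (rule subsetD)
    have zinf: "\<forall>j::int. z [^]\<^bsub>A\<^esub> j \<in> L \<longleftrightarrow> j = 0" using cz unfolding A.cycq_def by simp
    have hz: "lam (x [^]\<^bsub>Mu\<^esub> r) z \<otimes>\<^bsub>A\<^esub> inv\<^bsub>A\<^esub> z \<in> L" if "x \<in> N" for x
      using lt xrM[OF that] zM unfolding lamtriv_def by blast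
    have nc: "(0::nat) = 0 \<or> (Factorial_Ring.prime (0::nat) \<and> 0 \<noteq> r \<and> \<not> r dvd (0 - 1))" by simp
    define TA where "TA = {x \<in> N. x [^]\<^bsub>A\<^esub> r \<in> L}"
    define TM where "TM = {x \<in> N. x [^]\<^bsub>Mu\<^esub> r \<in> L}"
    have GA: "(TA \<lhd> A \<and> L \<subseteq> TA \<and> card (carrier (A\<lparr>carrier := TA\<rparr> Mod L)) = r \<and> A.cycq TA N z 0)
       \<or> ((0::nat) = 0 \<and> TA = L \<and> (\<exists>g. A.cycq L N g 0))"
      using A.gswap[OF ideal_A[OF L] ideal_A[OF M] ideal_A[OF N] LM MN cz cw r rodd nc] unfolding TA_def .
    have GM: "(TM \<lhd> Mu \<and> L \<subseteq> TM \<and> card (carrier (Mu\<lparr>carrier := TM\<rparr> Mod L)) = r \<and> Mu.cycq TM N z 0)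
       \<or> ((0::nat) = 0 \<and> TM = L \<and> (\<exists>g. Mu.cycq L N g 0))"
      using Mu.gswap[OF ideal_Mu[OF L] ideal_Mu[OF M] ideal_Mu[OF N] LM MN cz' cw' r rodd nc] unfolding TM_def .
    have TAN: "TA \<subseteq> N" unfolding TA_def by blast
    have TAlam: "\<And>b x. b \<in> bcar B \<Longrightarrow> x \<in> TA \<Longrightarrow> lam b x \<in> TA" using Tlam unfolding TA_def by blast
    from GA show ?thesis
    proof
      assume A1: "TA \<lhd> A \<and> L \<subseteq> TA \<and> card (carrier (A\<lparr>carrier := TA\<rparr> Mod L)) = r \<and> A.cycq TA N z 0"
      have A1': "TA \<lhd> A" "L \<subseteq> TA" "card (carrier (A\<lparr>carrier := TA\<rparr> Mod L)) = r" "A.cycq TA N z 0"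
        using A1 by auto
      have subM: "TA \<subseteq> TM"
      proof
        fix x assume x: "x \<in> TA"
        have "x [^]\<^bsub>Mu\<^esub> r \<in> L" using Tsub[OF L A1'(1) A1'(2) TAlam A1'(3) r0 x] .
        then show "x \<in> TM" unfolding TM_def using x TAN by blast
      qed
      have M1: "TM \<lhd> Mu" "L \<subseteq> TM" "card (carrier (Mu\<lparr>carrier := TM\<rparr> Mod L)) = r"
      proof -
        have "TM \<noteq> L"
        proof
          assume "TM = L"
          then have "TA \<subseteq> L" using subM by simp
          then have "TA = L" using A1'(2) by blast
          then have "card (carrier (A\<lparr>carrier := TA\<rparr> Mod L)) = 1"
          proof -
            assume "TA = L"
            have "carrier (A\<lparr>carrier := L\<rparr> Mod L) = {L}"
            proof -
              have "L #>\<^bsub>A\<^esub> x = L" if "x \<in> L" for x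
                using QLM.eq1_K[OF subsetD[OF LM that]] that by simp
              moreover have "L \<noteq> {}" using subgroup.one_closed[OF ideal_SA[OF L]] by blast
              ultimately show ?thesis by (auto simp: carrier_FactGroup)
            qed
            then show ?thesis using \<open>TA = L\<close> by simp
          qed
          then show False using A1'(3) r by auto
        qed
        then show "TM \<lhd> Mu" "L \<subseteq> TM" "card (carrier (Mu\<lparr>carrier := TM\<rparr> Mod L)) = r" using GM by auto
      qed
      have eq: "TA = TM" using eqT[OF L N A1'(1) A1'(2) TAN TAlam A1'(3) r0 M1(1) M1(2) M1(3) TM_def] .
      have TAi: "is_ideal B TA" using idealI[OF A1'(1)] M1(1) eq TAlam by simp
      have zinf': "\<forall>j::int. z [^]\<^bsub>A\<^esub> j \<in> TA \<longleftrightarrow> j = 0" using A1'(4) unfolding A.cycq_def by simp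
      have "lamtriv TA N"
        unfolding lamtriv_def
      proof
        fix x assume x: "x \<in> N"
        have xb: "x \<in> bcar B" using x Ns by blast
        show "\<forall>y\<in>N. lam x y \<otimes>\<^bsub>A\<^esub> inv\<^bsub>A\<^esub> y \<in> TA"
          using LT[OF TAi N TAN A1'(4) xb zN zinf' rodd] hz[OF x] A1'(2) by blast
      qed
      then have "pft p TA N" unfolding pft_def using A1'(4) by blast
      then show ?thesis using TAi A1'(2) TAN A1'(3) unfolding r_def by blast
    next
      assume "(0::nat) = 0 \<and> TA = L \<and> (\<exists>g. A.cycq L N g 0)"
      then obtain g where cg: "A.cycq L N g 0" by blast
      have "lamtriv L N"
        unfolding lamtriv_def
      proof
        fix x assume x: "x \<in> N"
        have xb: "x \<in> bcar B" using x Ns by blast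
        show "\<forall>y\<in>N. lam x y \<otimes>\<^bsub>A\<^esub> inv\<^bsub>A\<^esub> y \<in> L"
          using LT[OF L N LN cg xb zN zinf rodd hz[OF x]] .
      qed
      then have "pft p L N" unfolding pft_def using cg by blast
      then show ?thesis by blast
    qed
  qed
qed

end

lemma Uext:
  fixes G :: "'a monoid" (structure)
  assumes grp: "group G" and x: "x \<in> carrier G" and q: "Factorial_Ring.prime q" "q > p"
    and y: "x [^] q \<in> U_set G p"
  shows "x \<in> U_set G p"
proof -
  interpret group G by (rule grp)
  have y0: "ord (x [^] q) \<noteq> 0" and yp: "\<forall>t. Factorial_Ring.prime t \<and> t dvd ord (x [^] q) \<longrightarrow> t > p"
    using y unfolding U_set_def by auto
  define m where "m = ord (x [^] q)"
  have "(x [^] q) [^] m = \<one>" unfolding m_def using x by simp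
  then have "x [^] (q * m) = \<one>" using x by (simp add: nat_pow_pow)
  then have d: "ord x dvd q * m" using pow_eq_id[OF x] by simp
  have qm0: "q * m \<noteq> 0" using q y0 unfolding m_def by auto
  have o0: "ord x \<noteq> 0"
  proof
    assume "ord x = 0"
    then have "q * m = 0" using d by simp
    then show False using qm0 by simp
  qed
  have "\<forall>t. Factorial_Ring.prime t \<and> t dvd ord x \<longrightarrow> t > p"
  proof (intro allI impI)
    fix t assume t: "Factorial_Ring.prime t \<and> t dvd ord x"
    then have "t dvd q * m" using d dvd_trans by blast
    then have "t dvd q \<or> t dvd m" using t prime_dvd_mult_iff by blast
    then show "t > p"
    proof
      assume "t dvd q"
      then have "t = q" using t q(1) primes_dvd_imp_eq by blast
      then show ?thesis using q by simp
    next
      assume "t dvd m" then show ?thesis using yp t unfolding m_def by blast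
    qed
  qed
  then show ?thesis unfolding U_set_def using x o0 by simp
qed

lemma U_props:
  fixes G :: "'a monoid" (structure)
  assumes grp: "group G" and "x \<in> U_set G p"
  shows "x \<in> carrier G" "group.ord G x > 0" "x [^]\<^bsub>G\<^esub> group.ord G x = \<one>\<^bsub>G\<^esub>"
    "\<forall>t. Factorial_Ring.prime t \<and> t dvd group.ord G x \<longrightarrow> t > p"
  using assms group.pow_ord_eq_1[OF grp] unfolding U_set_def by auto

lemma U_one:
  fixes G :: "'a monoid" (structure)
  assumes grp: "group G"
  shows "\<one>\<^bsub>G\<^esub> \<in> U_set G p"
  unfolding U_set_def using group.ord_id[OF grp] monoid.one_closed[OF group.is_monoid[OF grp]] by simp

context brace begin

definition pchain :: "nat \<Rightarrow> 'a set \<Rightarrow> (nat \<Rightarrow> 'a set) \<Rightarrow> nat \<Rightarrow> 'a set \<Rightarrow> bool" where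
  "pchain p S C m K \<longleftrightarrow> C 0 = S \<and> C m = K \<and> (\<forall>i\<le>m. is_ideal B (C i)) \<and>
     (\<forall>i<m. C i \<subseteq> C (Suc i) \<and> pft p (C i) (C (Suc i)))"

lemma pchain_app:
  assumes c: "pchain p S C m K" and J: "is_ideal B J" and KJ: "K \<subseteq> J" and pf: "pft p K J"
  shows "pchain p S (C(Suc m := J)) (Suc m) J"
  using c J KJ pf unfolding pchain_def
  by (auto simp: less_Suc_eq le_Suc_eq)

lemma pchain_restr:
  assumes "pchain p S C (Suc m) K"
  shows "pchain p S C m (C m)" "C m \<subseteq> K" "pft p (C m) K" "is_ideal B (C m)"
  using assms unfolding pchain_def by auto

lemma push:
  assumes p: "Factorial_Ring.prime p"
  shows "pchain p S C m K \<Longrightarrow> is_ideal B J \<Longrightarrow> K \<subseteq> J \<Longrightarrow>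
    Factorial_Ring.prime (card (carrier (A\<lparr>carrier := J\<rparr> Mod K))) \<Longrightarrow> card (carrier (A\<lparr>carrier := J\<rparr> Mod K)) > p \<Longrightarrow>
    (\<exists>S' m' C'. is_ideal B S' \<and> S \<subseteq> S' \<and>
        card (carrier (A\<lparr>carrier := S'\<rparr> Mod S)) = card (carrier (A\<lparr>carrier := J\<rparr> Mod K)) \<and> pchain p S' C' m' J)
    \<or> (\<exists>m' C'. pchain p S C' m' J)"
proof (induction m arbitrary: C K J)
  case 0
  then have SK: "S = K" unfolding pchain_def by auto
  have "pchain p J (\<lambda>_. J) 0 J" unfolding pchain_def using 0 by simp
  then show ?case using 0 SK by blast
next
  case (Suc m)
  note ch = pchain_restr[OF Suc.prems(1)]
  have Ki: "is_ideal B K" using Suc.prems(1) unfolding pchain_def by auto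
  note BS = bswap[OF p ch(4) Ki Suc.prems(2) ch(2) Suc.prems(3) ch(3) Suc.prems(4) Suc.prems(5)]
  from BS show ?case
  proof
    assume "\<exists>M'. is_ideal B M' \<and> C m \<subseteq> M' \<and> M' \<subseteq> J \<and>
       card (carrier (A\<lparr>carrier := M'\<rparr> Mod C m)) = card (carrier (A\<lparr>carrier := J\<rparr> Mod K)) \<and> pft p M' J"
    then obtain M' where M': "is_ideal B M'" "C m \<subseteq> M'" "M' \<subseteq> J"
      "card (carrier (A\<lparr>carrier := M'\<rparr> Mod C m)) = card (carrier (A\<lparr>carrier := J\<rparr> Mod K))" "pft p M' J"
      by blast
    have IH: "(\<exists>S' m' C'. is_ideal B S' \<and> S \<subseteq> S' \<and>
        card (carrier (A\<lparr>carrier := S'\<rparr> Mod S)) = card (carrier (A\<lparr>carrier := M'\<rparr> Mod C m)) \<and> pchain p S' C' m' M')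
      \<or> (\<exists>m' C'. pchain p S C' m' M')"
      using Suc.IH[OF ch(1) M'(1) M'(2)] M'(4) Suc.prems(4) Suc.prems(5) by simp
    then show ?case
    proof
      assume "\<exists>S' m' C'. is_ideal B S' \<and> S \<subseteq> S' \<and>
        card (carrier (A\<lparr>carrier := S'\<rparr> Mod S)) = card (carrier (A\<lparr>carrier := M'\<rparr> Mod C m)) \<and> pchain p S' C' m' M'"
      then obtain S' m' C' where S': "is_ideal B S'" "S \<subseteq> S'"
        "card (carrier (A\<lparr>carrier := S'\<rparr> Mod S)) = card (carrier (A\<lparr>carrier := M'\<rparr> Mod C m))" "pchain p S' C' m' M'"
        by blast
      have "pchain p S' (C'(Suc m' := J)) (Suc m') J" using pchain_app[OF S'(4) Suc.prems(2) M'(3) M'(5)] .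
      then show ?case using S' M'(4) by metis
    next
      assume "\<exists>m' C'. pchain p S C' m' M'"
      then obtain m' C' where "pchain p S C' m' M'" by blast
      then have "pchain p S (C'(Suc m' := J)) (Suc m') J" using pchain_app[OF _ Suc.prems(2) M'(3) M'(5)] by blast
      then show ?case by blast
    qed
  next
    assume pf: "pft p (C m) J"
    have "C m \<subseteq> J" using ch(2) Suc.prems(3) by (rule subset_trans)
    then have "pchain p S (C(Suc m := J)) (Suc m) J" using pchain_app[OF ch(1) Suc.prems(2) _ pf] by blast
    then show ?case by blast
  qed
qed

end

context brace begin

lemma powA:
  assumes M: "is_ideal B M" and N: "is_ideal B N" and MN: "M \<subseteq> N"
    and c: "card (carrier (A\<lparr>carrier := N\<rparr> Mod M)) = r" and r0: "r > 0" and x: "x \<in> N"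
  shows "x [^]\<^bsub>A\<^esub> r \<in> M"
proof -
  interpret Q: qpair A M N using qpA[OF M ideal_SA[OF N] MN] .
  have xK: "M #>\<^bsub>A\<^esub> x \<in> carrier Q.K" using Q.inK[OF x] .
  have "(M #>\<^bsub>A\<^esub> x) [^]\<^bsub>Q.K\<^esub> r = \<one>\<^bsub>Q.K\<^esub>"
    using group.pow_order_eq_1[OF Q.KG xK] c unfolding order_def by simp
  then have "M #>\<^bsub>A\<^esub> (x [^]\<^bsub>A\<^esub> r) = M" using Q.npow_K[OF x] by simp
  moreover have "x [^]\<^bsub>A\<^esub> r \<in> N"
    using Q.pow_in_N[OF x, of "int r"] by (simp add: int_pow_int)
  ultimately show ?thesis using Q.eq1_K by blast
qed

lemma piext:
  assumes p: "Factorial_Ring.prime p" and S: "is_ideal B S" and S': "is_ideal B S'" and SS: "S \<subseteq> S'"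
    and Spi: "\<forall>x\<in>S. x \<in> U_plus B p \<and> x \<in> U_times B p"
    and q: "Factorial_Ring.prime q" "q > p" and c: "card (carrier (A\<lparr>carrier := S'\<rparr> Mod S)) = q"
    and x: "x \<in> S'"
  shows "x \<in> U_plus B p \<and> x \<in> U_times B p"
proof -
  have q0: "q > 0" using q by simp
  have xb: "x \<in> bcar B" using x ideal_sub[OF S'] by blast
  have "x [^]\<^bsub>A\<^esub> q \<in> S" using powA[OF S S' SS c q0 x] .
  then have "x [^]\<^bsub>A\<^esub> q \<in> U_set A p" using Spi unfolding U_plus_def by blast
  then have 1: "x \<in> U_plus B p" using Uext[OF grpA _ q] xb unfolding U_plus_def by simp
  have "x [^]\<^bsub>Mu\<^esub> q \<in> S" using powM[OF S S' SS c q0 x] .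
  then have "x [^]\<^bsub>Mu\<^esub> q \<in> U_set Mu p" using Spi unfolding U_times_def by blast
  then have 2: "x \<in> U_times B p" using Uext[OF grpMu _ q] xb unfolding U_times_def by simp
  show ?thesis using 1 2 by simp
qed

lemma pft_alt:
  assumes pf: "pft p L M" and d: "d > 0" and op: "\<forall>t. Factorial_Ring.prime t \<and> t dvd d \<longrightarrow> t > p"
  shows "(\<exists>z. A.cycq L M z 0 \<and> lamtriv L M) \<or>
     (Factorial_Ring.prime (card (carrier (A\<lparr>carrier := M\<rparr> Mod L))) \<and> coprime d (card (carrier (A\<lparr>carrier := M\<rparr> Mod L))))"
proof -
  define c where "c = card (carrier (A\<lparr>carrier := M\<rparr> Mod L))"
  have "(Factorial_Ring.prime c \<and> c \<le> p) \<or> ((\<exists>z. A.cycq L M z 0) \<and> lamtriv L M)"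
    using pf unfolding pft_def c_def .
  then have "(\<exists>z. A.cycq L M z 0 \<and> lamtriv L M) \<or> (Factorial_Ring.prime c \<and> coprime d c)"
  proof
    assume s: "Factorial_Ring.prime c \<and> c \<le> p"
    have "\<not> c dvd d"
    proof
      assume "c dvd d"
      then have "c > p" using op s by blast
      then show False using s by simp
    qed
    then have "coprime c d" using prime_imp_coprime[of c d] s by simp
    then have "coprime d c" by (simp add: coprime_commute)
    then show ?thesis using s by simp
  next
    assume "(\<exists>z. A.cycq L M z 0) \<and> lamtriv L M"
    then show ?thesis by blast
  qed
  then show ?thesis unfolding c_def .
qed

lemma down:
  assumes ch: "pchain p S C m K" and x: "x \<in> K"
    and xU: "x \<in> U_plus B p \<or> x \<in> U_times B p"
  shows "x \<in> S"
proof -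
  have "\<forall>i\<le>m. x \<in> C (m - i)"
  proof (intro allI impI)
    fix i assume "i \<le> m"
    then show "x \<in> C (m - i)"
    proof (induction i)
      case 0 then show ?case using ch x unfolding pchain_def by simp
    next
      case (Suc i)
      define j where "j = m - Suc i"
      have jm: "j < m" using Suc.prems unfolding j_def by simp
      have sj: "Suc j = m - i" using Suc.prems unfolding j_def by simp
      have xin: "x \<in> C (Suc j)" using Suc sj by simp
      have Ij: "is_ideal B (C j)" "is_ideal B (C (Suc j))" "C j \<subseteq> C (Suc j)" "pft p (C j) (C (Suc j))"
        using ch jm unfolding pchain_def by auto
      from xU show ?case
      proof
        assume xp: "x \<in> U_plus B p"
        interpret Q: qpair A "C j" "C (Suc j)" using qpA[OF Ij(1) ideal_SA[OF Ij(2)] Ij(3)] .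
        have u: "x \<in> bcar B" "A.ord x > 0" "x [^]\<^bsub>A\<^esub> A.ord x = \<one>\<^bsub>A\<^esub>" "\<forall>t. Factorial_Ring.prime t \<and> t dvd A.ord x \<longrightarrow> t > p"
          using U_props[OF grpA, of x p] xp unfolding U_plus_def by auto
        have one: "\<one>\<^bsub>A\<^esub> \<in> C j" using subgroup.one_closed[OF ideal_SA[OF Ij(1)]] .
        have alt: "(\<exists>z. A.cycq (C j) (C (Suc j)) z 0) \<or>
          (Factorial_Ring.prime (card (carrier Q.K)) \<and> coprime (A.ord x) (card (carrier Q.K)))"
          using pft_alt[OF Ij(4) u(2) u(4)] by blast
        have "x \<in> C j" using Q.descent[OF xin _ u(2) alt] u(3) one by simp
        then show ?case unfolding j_def .
      next
        assume xt: "x \<in> U_times B p"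
        interpret Q: qpair Mu "C j" "C (Suc j)" using qpMu[OF Ij(1) ideal_SMu[OF Ij(2)] Ij(3)] .
        have u: "x \<in> bcar B" "Mu.ord x > 0" "x [^]\<^bsub>Mu\<^esub> Mu.ord x = \<one>\<^bsub>Mu\<^esub>" "\<forall>t. Factorial_Ring.prime t \<and> t dvd Mu.ord x \<longrightarrow> t > p"
          using U_props[OF grpMu, of x p] xt unfolding U_times_def by auto
        have one: "\<one>\<^bsub>Mu\<^esub> \<in> C j" using subgroup.one_closed[OF ideal_SMu[OF Ij(1)]] .
        have ceq: "card (carrier Q.K) = card (carrier (A\<lparr>carrier := C (Suc j)\<rparr> Mod C j))"
          using quot_carrier_eq[OF Ij(1) ideal_sub[OF Ij(2)]] by simp
        have alt: "(\<exists>z. Mu.cycq (C j) (C (Suc j)) z 0) \<or>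
          (Factorial_Ring.prime (card (carrier Q.K)) \<and> coprime (Mu.ord x) (card (carrier Q.K)))"
        proof -
          have "(\<exists>z. A.cycq (C j) (C (Suc j)) z 0 \<and> lamtriv (C j) (C (Suc j))) \<or>
            (Factorial_Ring.prime (card (carrier (A\<lparr>carrier := C (Suc j)\<rparr> Mod C j))) \<and>
             coprime (Mu.ord x) (card (carrier (A\<lparr>carrier := C (Suc j)\<rparr> Mod C j))))"
            using pft_alt[OF Ij(4) u(2) u(4)] .
          then show ?thesis
          proof
            assume "\<exists>z. A.cycq (C j) (C (Suc j)) z 0 \<and> lamtriv (C j) (C (Suc j))"
            then obtain z where "A.cycq (C j) (C (Suc j)) z 0" "lamtriv (C j) (C (Suc j))" by blast
            then have "Mu.cycq (C j) (C (Suc j)) z 0" using Ztrans[OF Ij(1) Ij(2) Ij(3)] by blast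
            then show ?thesis by blast
          next
            assume "Factorial_Ring.prime (card (carrier (A\<lparr>carrier := C (Suc j)\<rparr> Mod C j))) \<and>
             coprime (Mu.ord x) (card (carrier (A\<lparr>carrier := C (Suc j)\<rparr> Mod C j)))"
            then show ?thesis unfolding ceq by blast
          qed
        qed
        have "x \<in> C j" using Q.descent[OF xin _ u(2) alt] u(3) one by simp
        then show ?case unfolding j_def .
      qed
    qed
  qed
  then have "x \<in> C (m - m)" by blast
  then have "x \<in> C 0" by simp
  then show ?thesis using ch unfolding pchain_def by simp
qed

end

context brace begin

lemma main:
  assumes p: "Factorial_Ring.prime p" and ss: "supersoluble B"
  shows "U_plus B p = U_times B p \<and> is_ideal B (U_plus B p)"
proof -
  obtain I :: "nat \<Rightarrow> 'a set" and n where I0: "I 0 = {\<one>\<^bsub>A\<^esub>}" and In: "I n = bcar B"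
    and Ii: "\<forall>i\<le>n. is_ideal B (I i)"
    and Is: "\<forall>i<n. I i \<subseteq> I (Suc i) \<and>
        ((infinite (carrier (A\<lparr>carrier := I (Suc i)\<rparr> Mod I i)) \<and>
          (\<exists>g\<in>carrier (A\<lparr>carrier := I (Suc i)\<rparr> Mod I i).
             generate (A\<lparr>carrier := I (Suc i)\<rparr> Mod I i) {g} = carrier (A\<lparr>carrier := I (Suc i)\<rparr> Mod I i)) \<and>
          quot_in_soc B (I i) (I (Suc i)))
         \<or> Factorial_Ring.prime (card (carrier (A\<lparr>carrier := I (Suc i)\<rparr> Mod I i))))"
    using ss unfolding supersoluble_def quot_add_def by blast
  have claim: "\<exists>S m C. is_ideal B S \<and> (\<forall>x\<in>S. x \<in> U_plus B p \<and> x \<in> U_times B p) \<and> pchain p S C m (I k)"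
    if "k \<le> n" for k
    using that
  proof (induction k)
    case 0
    have id0: "is_ideal B (I 0)" using Ii by simp
    have "\<forall>x\<in>I 0. x \<in> U_plus B p \<and> x \<in> U_times B p"
      using I0 U_one[OF grpA, of p] U_one[OF grpMu, of p] one_eq unfolding U_plus_def U_times_def by simp
    moreover have "pchain p (I 0) (\<lambda>_. I 0) 0 (I 0)" unfolding pchain_def using id0 by simp
    ultimately show ?case using id0 by blast
  next
    case (Suc k)
    then have kn: "k < n" by simp
    obtain S m C where S: "is_ideal B S" and Spi: "\<forall>x\<in>S. x \<in> U_plus B p \<and> x \<in> U_times B p"
      and ch: "pchain p S C m (I k)" using Suc.IH kn by auto
    have Ik: "is_ideal B (I k)" and ISk: "is_ideal B (I (Suc k))" using Ii kn by auto
    have sub: "I k \<subseteq> I (Suc k)" using Is kn by blast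
    interpret Q: qpair A "I k" "I (Suc k)" using qpA[OF Ik ideal_SA[OF ISk] sub] .
    have fac: "(infinite (carrier Q.K) \<and> (\<exists>g\<in>carrier Q.K. generate Q.K {g} = carrier Q.K) \<and>
          quot_in_soc B (I k) (I (Suc k))) \<or> Factorial_Ring.prime (card (carrier Q.K))"
      using Is kn by blast
    then show ?case
    proof
      assume z: "infinite (carrier Q.K) \<and> (\<exists>g\<in>carrier Q.K. generate Q.K {g} = carrier Q.K) \<and>
          quot_in_soc B (I k) (I (Suc k))"
      then obtain g where g: "g \<in> carrier Q.K" "generate Q.K {g} = carrier Q.K" by blast
      have c0: "card (carrier Q.K) = 0" using z by simp
      obtain zz where cz: "A.cycq (I k) (I (Suc k)) zz 0" using Q.K_cycq[OF g] c0 by auto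
      have lt: "lamtriv (I k) (I (Suc k))"
        unfolding lamtriv_def
      proof (intro ballI)
        fix x y assume x: "x \<in> I (Suc k)" and y: "y \<in> I (Suc k)"
        have yb: "y \<in> bcar B" using y ideal_sub[OF ISk] by blast
        have "bplus B (blambda B x y) (inv\<^bsub>addgrp B\<^esub> y) \<in> I k"
          using z x yb unfolding quot_in_soc_def by blast
        then show "lam x y \<otimes>\<^bsub>A\<^esub> inv\<^bsub>A\<^esub> y \<in> I k" by (simp add: mult_A lam_blambda)
      qed
      have "pft p (I k) (I (Suc k))" unfolding pft_def using cz lt by blast
      then have "pchain p S (C(Suc m := I (Suc k))) (Suc m) (I (Suc k))"
        using pchain_app[OF ch ISk sub] by blast
      then show ?case using S Spi by blast
    next
      assume q: "Factorial_Ring.prime (card (carrier Q.K))"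
      show ?case
      proof (cases "card (carrier Q.K) \<le> p")
        case True
        then have "pft p (I k) (I (Suc k))" unfolding pft_def using q by blast
        then have "pchain p S (C(Suc m := I (Suc k))) (Suc m) (I (Suc k))"
          using pchain_app[OF ch ISk sub] by blast
        then show ?thesis using S Spi by blast
      next
        case False
        then have qp: "card (carrier Q.K) > p" by simp
        from push[OF p ch ISk sub q qp] show ?thesis
        proof
          assume "\<exists>S' m' C'. is_ideal B S' \<and> S \<subseteq> S' \<and>
             card (carrier (A\<lparr>carrier := S'\<rparr> Mod S)) = card (carrier Q.K) \<and> pchain p S' C' m' (I (Suc k))"
          then obtain S' m' C' where S': "is_ideal B S'" "S \<subseteq> S'"
            "card (carrier (A\<lparr>carrier := S'\<rparr> Mod S)) = card (carrier Q.K)" "pchain p S' C' m' (I (Suc k))"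
            by blast
          have "\<forall>x\<in>S'. x \<in> U_plus B p \<and> x \<in> U_times B p"
            using piext[OF p S S'(1) S'(2) Spi q qp S'(3)] by blast
          then show ?thesis using S'(1) S'(4) by blast
        next
          assume "\<exists>m' C'. pchain p S C' m' (I (Suc k))"
          then show ?thesis using S Spi by blast
        qed
      qed
    qed
  qed
  obtain S m C where S: "is_ideal B S" and Spi: "\<forall>x\<in>S. x \<in> U_plus B p \<and> x \<in> U_times B p"
    and ch: "pchain p S C m (I n)" using claim[of n] by auto
  have 1: "U_plus B p \<subseteq> S"
  proof
    fix x assume x: "x \<in> U_plus B p"
    then have "x \<in> bcar B" unfolding U_plus_def U_set_def by simp
    then show "x \<in> S" using down[OF ch] x In by simp
  qed
  have 2: "U_times B p \<subseteq> S"
  proof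
    fix x assume x: "x \<in> U_times B p"
    then have "x \<in> bcar B" unfolding U_times_def U_set_def by simp
    then show "x \<in> S" using down[OF ch] x In by simp
  qed
  have "U_plus B p = S" using 1 Spi by blast
  moreover have "U_times B p = S" using 2 Spi by blast
  ultimately show ?thesis using S by simp
qed

end

theorem corollary3p13:
  fixes B :: "'a brace_str" and p :: nat
  assumes "is_brace B" and "supersoluble B" and "Factorial_Ring.prime p"
  shows "U_plus B p = U_times B p \<and> is_ideal B (U_plus B p)"
proof -
  interpret brace B using assms(1) by (rule brace.intro)
  show ?thesis using main[OF assms(3) assms(2)] .
qed

end
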